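(* Let $(\psi(y,z),y,z)$ be a timelike Born-Infeld soliton surface in $\mathbb{L}^3$ without singularities. Then for any point at which its Gauss curvature is nonzero there is an open neighbourhood, parameters $(r,s)$, and two $C^2$ functions $F$ and $G$ of one variable such that on that neighbourhood the surface is represented as $$y-z=F(r)-\int s^2G'(s)\,ds,\qquad y+z=G(s)-\int r^2F'(r)\,dr,\qquad \psi(y,z)=\int rF'(r)\,dr+\int sG'(s)\,ds.$$ Conversely, any graph-like surface $(\psi(y,z),y,z)$ represented in this way is a Born-Infeld soliton surface.
   Context: $\mathbb{L}^3$ denotes $\mathbb{R}^3$ with the metric $ds^2=dx^2+dy^2-dz^2$. A Born-Infeld soliton surface is a surface $(\psi(y,z),y,z)$ where $\psi$ satisfies the Born-Infeld equation $(1-\psi_z^2)\psi_{yy}+2\psi_y\psi_z\psi_{yz}-(1+\psi_y^2)\psi_{zz}=0$; it is timelike without singularities when $\psi_y^2-\psi_z^2+1>0$ everywhere. Its Gauss curvature is $K=\frac{\psi_{yy}\psi_{zz}-\psi_{yz}^2}{(\psi_y^2-\psi_z^2+1)^2}$. The integrals denote (fixed) antiderivatives. *)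

theory Defs
  imports "HOL-Analysis.Analysis"
begin

definition pdy :: "(real \<Rightarrow> real \<Rightarrow> real) \<Rightarrow> real \<Rightarrow> real \<Rightarrow> real" where
  "pdy f y z = deriv (\<lambda>t. f t z) y"

definition pdz :: "(real \<Rightarrow> real \<Rightarrow> real) \<Rightarrow> real \<Rightarrow> real \<Rightarrow> real" where
  "pdz f y z = deriv (\<lambda>t. f y t) z"

fun Ck_on :: "nat \<Rightarrow> (real \<times> real) set \<Rightarrow> (real \<Rightarrow> real \<Rightarrow> real) \<Rightarrow> bool" where
  "Ck_on 0 U f = continuous_on U (\<lambda>(y, z). f y z)"
| "Ck_on (Suc k) U f =
     ((\<lambda>(y, z). f y z) differentiable_on U \<and> Ck_on k U (pdy f) \<and> Ck_on k U (pdz f))"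

definition smooth_on2 :: "(real \<times> real) set \<Rightarrow> (real \<Rightarrow> real \<Rightarrow> real) \<Rightarrow> bool" where
  "smooth_on2 U f \<longleftrightarrow> (\<forall>k. Ck_on k U f)"

definition C2_on1 :: "real set \<Rightarrow> (real \<Rightarrow> real) \<Rightarrow> bool" where
  "C2_on1 I F \<longleftrightarrow> F differentiable_on I \<and> deriv F differentiable_on I
                   \<and> continuous_on I (deriv (deriv F))"

definition BI_eq :: "(real \<Rightarrow> real \<Rightarrow> real) \<Rightarrow> real \<Rightarrow> real \<Rightarrow> bool" where
  "BI_eq psi y z \<longleftrightarrow>
     (1 - (pdz psi y z)\<^sup>2) * pdy (pdy psi) y z
     + 2 * pdy psi y z * pdz psi y z * pdz (pdy psi) y z
     - (1 + (pdy psi y z)\<^sup>2) * pdz (pdz psi) y z = 0"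

definition gauss_curv :: "(real \<Rightarrow> real \<Rightarrow> real) \<Rightarrow> real \<Rightarrow> real \<Rightarrow> real" where
  "gauss_curv psi y z =
     (pdy (pdy psi) y z * pdz (pdz psi) y z - (pdz (pdy psi) y z)\<^sup>2)
     / ((pdy psi y z)\<^sup>2 - (pdz psi y z)\<^sup>2 + 1)\<^sup>2"

definition param_chart :: "(real \<times> real) set \<Rightarrow> (real \<Rightarrow> real \<Rightarrow> real) \<Rightarrow> (real \<Rightarrow> real \<Rightarrow> real) \<Rightarrow> bool" where
  "param_chart U r s \<longleftrightarrow> Ck_on 1 U r \<and> Ck_on 1 U s
     \<and> inj_on (\<lambda>(y, z). (r y z, s y z)) U
     \<and> (\<forall>(y, z)\<in>U. pdy r y z * pdz s y z - pdz r y z * pdy s y z \<noteq> 0)"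

text \<open>The representation of the theorem on U, with C^2 functions F, G and fixed
  antiderivatives A of s^2 G'(s), B of r^2 F'(r), C of r F'(r), D of s G'(s).\<close>
definition BI_rep :: "(real \<Rightarrow> real \<Rightarrow> real) \<Rightarrow> (real \<times> real) set
     \<Rightarrow> (real \<Rightarrow> real \<Rightarrow> real) \<Rightarrow> (real \<Rightarrow> real \<Rightarrow> real)
     \<Rightarrow> (real \<Rightarrow> real) \<Rightarrow> (real \<Rightarrow> real) \<Rightarrow> (real \<Rightarrow> real) \<Rightarrow> (real \<Rightarrow> real)
     \<Rightarrow> (real \<Rightarrow> real) \<Rightarrow> (real \<Rightarrow> real) \<Rightarrow> bool" where
  "BI_rep psi U r s F G A B C D \<longleftrightarrow>
     (\<exists>I J. open I \<and> open J
        \<and> (\<forall>(y, z)\<in>U. r y z \<in> I \<and> s y z \<in> J)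
        \<and> C2_on1 I F \<and> C2_on1 J G
        \<and> (\<forall>x\<in>J. (A has_real_derivative x\<^sup>2 * deriv G x) (at x))
        \<and> (\<forall>x\<in>I. (B has_real_derivative x\<^sup>2 * deriv F x) (at x))
        \<and> (\<forall>x\<in>I. (C has_real_derivative x * deriv F x) (at x))
        \<and> (\<forall>x\<in>J. (D has_real_derivative x * deriv G x) (at x))
        \<and> (\<forall>(y, z)\<in>U.
             y - z = F (r y z) - A (s y z)
           \<and> y + z = G (s y z) - B (r y z)
           \<and> psi y z = C (r y z) + D (s y z)))"

end

theory Submission
  imports Defs
begin



lemma partials_from_diff:
  fixes f :: "real \<Rightarrow> real \<Rightarrow> real"
  assumes "(case_prod f) differentiable (at (y,z))"
  shows "((\<lambda>t. f t z) has_real_derivative pdy f y z) (at y)"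
    and "((\<lambda>t. f y t) has_real_derivative pdz f y z) (at z)"
    and "(case_prod f has_derivative (\<lambda>(h,k). pdy f y z * h + pdz f y z * k)) (at (y,z))"
proof -
  obtain D where D: "(case_prod f has_derivative D) (at (y,z))"
    using assms differentiable_def by blast
  have lin: "linear D" using D has_derivative_linear by blast
  have e1: "D (h,0) = h * D (1,0)" for h
    using linear_scale[OF lin, of h "(1,0)"] by simp
  have e2: "D (0,k) = k * D (0,1)" for k
    using linear_scale[OF lin, of k "(0,1)"] by simp
  have e3: "D (h,k) = h * D (1,0) + k * D (0,1)" for h k
  proof -
    have "D (h,k) = D ((h,0) + (0,k))" by simp
    also have "\<dots> = D (h,0) + D (0,k)" by (rule linear_add[OF lin])
    finally show ?thesis using e1[of h] e2[of k] by simp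
  qed
  have p1: "((\<lambda>t. (t,z)) has_derivative (\<lambda>h. (h,0))) (at y)"
    by (auto intro!: derivative_eq_intros)
  have p2: "((\<lambda>t. (y,t)) has_derivative (\<lambda>h. (0,h))) (at z)"
    by (auto intro!: derivative_eq_intros)
  have "((case_prod f \<circ> (\<lambda>t. (t,z))) has_derivative (D \<circ> (\<lambda>h. (h,0)))) (at y)"
    by (rule diff_chain_at[OF p1]) (use D in simp)
  moreover have "D \<circ> (\<lambda>h. (h,0)) = (\<lambda>h. D (1,0) * h)"
  proof
    fix h show "(D \<circ> (\<lambda>h. (h,0))) h = D (1,0) * h" using e1[of h] by (simp add: mult.commute)
  qed
  ultimately have d1: "((\<lambda>t. f t z) has_real_derivative D (1,0)) (at y)"
    unfolding has_field_derivative_def by (simp add: o_def)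
  have "((case_prod f \<circ> (\<lambda>t. (y,t))) has_derivative (D \<circ> (\<lambda>h. (0,h)))) (at z)"
    by (rule diff_chain_at[OF p2]) (use D in simp)
  moreover have "D \<circ> (\<lambda>h. (0,h)) = (\<lambda>h. D (0,1) * h)"
  proof
    fix h show "(D \<circ> (\<lambda>h. (0,h))) h = D (0,1) * h" using e2[of h] by (simp add: mult.commute)
  qed
  ultimately have d2: "((\<lambda>t. f y t) has_real_derivative D (0,1)) (at z)"
    unfolding has_field_derivative_def by (simp add: o_def)
  have v1: "pdy f y z = D (1,0)" unfolding pdy_def using d1 DERIV_imp_deriv by blast
  have v2: "pdz f y z = D (0,1)" unfolding pdz_def using d2 DERIV_imp_deriv by blast
  show "((\<lambda>t. f t z) has_real_derivative pdy f y z) (at y)" using d1 v1 by simp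
  show "((\<lambda>t. f y t) has_real_derivative pdz f y z) (at z)" using d2 v2 by simp
  have "D = (\<lambda>(h,k). pdy f y z * h + pdz f y z * k)"
  proof
    fix x :: "real \<times> real"
    obtain h k where "x = (h,k)" by fastforce
    thus "D x = (\<lambda>(h,k). pdy f y z * h + pdz f y z * k) x"
      using e3[of h k] by (simp add: v1 v2 mult.commute)
  qed
  thus "(case_prod f has_derivative (\<lambda>(h,k). pdy f y z * h + pdz f y z * k)) (at (y,z))"
    using D by simp
qed

lemma Ck1_iff: "Ck_on 1 U f \<longleftrightarrow> (case_prod f differentiable_on U
   \<and> continuous_on U (case_prod (pdy f)) \<and> continuous_on U (case_prod (pdz f)))"
  by (simp add: One_nat_def)

lemma Ck1_diff_at: "Ck_on 1 U f \<Longrightarrow> open U \<Longrightarrow> (y,z)\<in>U \<Longrightarrow> case_prod f differentiable (at (y,z))"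
  by (auto simp: Ck1_iff differentiable_on_eq_differentiable_at)

lemma Ck1_cont: "Ck_on 1 U f \<Longrightarrow> continuous_on U (case_prod f)"
  by (auto simp: Ck1_iff intro: differentiable_imp_continuous_on)

lemma open_line_y: "open U \<Longrightarrow> (y,z) \<in> U \<Longrightarrow> eventually (\<lambda>t. (t,z) \<in> U) (nhds y)"
proof -
  assume U: "open U" "(y,z) \<in> U"
  have "open ((\<lambda>t. (t,z)) -` U)"
    by (rule open_vimage[OF U(1)]) (auto intro!: continuous_intros)
  hence "eventually (\<lambda>t. t \<in> (\<lambda>t. (t,z)) -` U) (nhds y)"
    by (rule eventually_nhds_in_open) (use U in auto)
  thus ?thesis by simp
qed

lemma open_line_z: "open U \<Longrightarrow> (y,z) \<in> U \<Longrightarrow> eventually (\<lambda>t. (y,t) \<in> U) (nhds z)"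
proof -
  assume U: "open U" "(y,z) \<in> U"
  have "open ((\<lambda>t. (y,t)) -` U)"
    by (rule open_vimage[OF U(1)]) (auto intro!: continuous_intros)
  hence "eventually (\<lambda>t. t \<in> (\<lambda>t. (y,t)) -` U) (nhds z)"
    by (rule eventually_nhds_in_open) (use U in auto)
  thus ?thesis by simp
qed

lemma pd_cong:
  assumes "open U" "(y,z) \<in> U" "\<And>a b. (a,b) \<in> U \<Longrightarrow> f a b = g a b"
  shows "pdy f y z = pdy g y z" "pdz f y z = pdz g y z"
proof -
  show "pdy f y z = pdy g y z" unfolding pdy_def
    by (rule deriv_cong_ev[OF eventually_mono[OF open_line_y[OF assms(1,2)]] refl]) (simp add: assms(3))
  show "pdz f y z = pdz g y z" unfolding pdz_def
    by (rule deriv_cong_ev[OF eventually_mono[OF open_line_z[OF assms(1,2)]] refl]) (simp add: assms(3))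
qed

lemma diff_on_cong:
  assumes "open U" "\<And>a b. (a,b) \<in> U \<Longrightarrow> f a b = g a b" "case_prod f differentiable_on U"
  shows "case_prod g differentiable_on U"
  unfolding differentiable_on_eq_differentiable_at[OF assms(1)]
proof
  fix x assume x: "x \<in> U"
  then obtain D where "(case_prod f has_derivative D) (at x)"
    using assms(3) unfolding differentiable_on_eq_differentiable_at[OF assms(1)] differentiable_def by blast
  hence "(case_prod g has_derivative D) (at x)"
    by (rule has_derivative_transform_within_open[OF _ assms(1) x]) (use assms(2) in auto)
  thus "case_prod g differentiable at x" unfolding differentiable_def by blast
qed

lemma Ck_cong:
  assumes "open U" "\<And>a b. (a,b) \<in> U \<Longrightarrow> f a b = g a b"
  shows "Ck_on k U f = Ck_on k U g"
  using assms(2)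
proof (induction k arbitrary: f g)
  case 0
  then show ?case by (auto intro!: continuous_on_cong)
next
  case (Suc k)
  have d: "(case_prod f differentiable_on U) = (case_prod g differentiable_on U)"
    using diff_on_cong[OF assms(1), of f g] diff_on_cong[OF assms(1), of g f] Suc.prems by metis
  have "Ck_on k U (pdy f) = Ck_on k U (pdy g)"
    by (rule Suc.IH) (rule pd_cong[OF assms(1)], auto simp: Suc.prems)
  moreover have "Ck_on k U (pdz f) = Ck_on k U (pdz g)"
    by (rule Suc.IH) (rule pd_cong[OF assms(1)], auto simp: Suc.prems)
  ultimately show ?case using d by simp
qed

lemma Ck_mono:
  assumes "V \<subseteq> U" shows "Ck_on k U f \<Longrightarrow> Ck_on k V f"
proof (induction k arbitrary: f)
  case 0 then show ?case using assms continuous_on_subset by auto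
next
  case (Suc k) then show ?case using assms differentiable_on_subset by auto
qed

lemma pd_comp:
  fixes H f1 f2 :: "real \<Rightarrow> real \<Rightarrow> real"
  assumes H: "case_prod H differentiable (at (f1 y z, f2 y z))"
      and d1: "case_prod f1 differentiable (at (y,z))"
      and d2: "case_prod f2 differentiable (at (y,z))"
  shows "(\<lambda>(y,z). H (f1 y z) (f2 y z)) differentiable (at (y,z))"
    and "pdy (\<lambda>y z. H (f1 y z) (f2 y z)) y z
          = pdy H (f1 y z) (f2 y z) * pdy f1 y z + pdz H (f1 y z) (f2 y z) * pdy f2 y z"
    and "pdz (\<lambda>y z. H (f1 y z) (f2 y z)) y z
          = pdy H (f1 y z) (f2 y z) * pdz f1 y z + pdz H (f1 y z) (f2 y z) * pdz f2 y z"
proof -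
  let ?a = "f1 y z" and ?b = "f2 y z"
  have DH: "(case_prod H has_derivative (\<lambda>(h,k). pdy H ?a ?b * h + pdz H ?a ?b * k)) (at (?a,?b))"
    using partials_from_diff(3)[OF H] .
  have e: "(\<lambda>(y,z). H (f1 y z) (f2 y z)) = case_prod H \<circ> (\<lambda>x. (case_prod f1 x, case_prod f2 x))"
    by (auto simp: fun_eq_iff)
  show "(\<lambda>(y,z). H (f1 y z) (f2 y z)) differentiable (at (y,z))"
    unfolding e
    by (rule differentiable_chain_at) (use d1 d2 H in \<open>auto intro!: differentiable_Pair\<close>)
  have y1: "((\<lambda>t. f1 t z) has_derivative (\<lambda>h. pdy f1 y z * h)) (at y)"
    using partials_from_diff(1)[OF d1] by (simp add: has_field_derivative_def)
  have y2: "((\<lambda>t. f2 t z) has_derivative (\<lambda>h. pdy f2 y z * h)) (at y)"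
    using partials_from_diff(1)[OF d2] by (simp add: has_field_derivative_def)
  have "((\<lambda>t. (f1 t z, f2 t z)) has_derivative (\<lambda>h. (pdy f1 y z * h, pdy f2 y z * h))) (at y)"
    by (rule has_derivative_Pair[OF y1 y2])
  hence "(case_prod H \<circ> (\<lambda>t. (f1 t z, f2 t z)) has_derivative
           (\<lambda>(h,k). pdy H ?a ?b * h + pdz H ?a ?b * k) \<circ> (\<lambda>h. (pdy f1 y z * h, pdy f2 y z * h))) (at y)"
    by (rule diff_chain_at) (use DH in simp)
  hence "((\<lambda>t. H (f1 t z) (f2 t z)) has_derivative
           (\<lambda>h. pdy H ?a ?b * (pdy f1 y z * h) + pdz H ?a ?b * (pdy f2 y z * h))) (at y)"
    by (simp add: o_def)
  hence "((\<lambda>t. H (f1 t z) (f2 t z)) has_real_derivative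
           (pdy H ?a ?b * pdy f1 y z + pdz H ?a ?b * pdy f2 y z)) (at y)"
    unfolding has_field_derivative_def
    by (rule has_derivative_eq_rhs) (auto simp: fun_eq_iff algebra_simps)
  thus "pdy (\<lambda>y z. H (f1 y z) (f2 y z)) y z
          = pdy H (f1 y z) (f2 y z) * pdy f1 y z + pdz H (f1 y z) (f2 y z) * pdy f2 y z"
    unfolding pdy_def by (rule DERIV_imp_deriv)
  have z1: "((\<lambda>t. f1 y t) has_derivative (\<lambda>h. pdz f1 y z * h)) (at z)"
    using partials_from_diff(2)[OF d1] by (simp add: has_field_derivative_def)
  have z2: "((\<lambda>t. f2 y t) has_derivative (\<lambda>h. pdz f2 y z * h)) (at z)"
    using partials_from_diff(2)[OF d2] by (simp add: has_field_derivative_def)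
  have "((\<lambda>t. (f1 y t, f2 y t)) has_derivative (\<lambda>h. (pdz f1 y z * h, pdz f2 y z * h))) (at z)"
    by (rule has_derivative_Pair[OF z1 z2])
  hence "(case_prod H \<circ> (\<lambda>t. (f1 y t, f2 y t)) has_derivative
           (\<lambda>(h,k). pdy H ?a ?b * h + pdz H ?a ?b * k) \<circ> (\<lambda>h. (pdz f1 y z * h, pdz f2 y z * h))) (at z)"
    by (rule diff_chain_at) (use DH in simp)
  hence "((\<lambda>t. H (f1 y t) (f2 y t)) has_derivative
           (\<lambda>h. pdy H ?a ?b * (pdz f1 y z * h) + pdz H ?a ?b * (pdz f2 y z * h))) (at z)"
    by (simp add: o_def)
  hence "((\<lambda>t. H (f1 y t) (f2 y t)) has_real_derivative
           (pdy H ?a ?b * pdz f1 y z + pdz H ?a ?b * pdz f2 y z)) (at z)"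
    unfolding has_field_derivative_def
    by (rule has_derivative_eq_rhs) (auto simp: fun_eq_iff algebra_simps)
  thus "pdz (\<lambda>y z. H (f1 y z) (f2 y z)) y z
          = pdy H (f1 y z) (f2 y z) * pdz f1 y z + pdz H (f1 y z) (f2 y z) * pdz f2 y z"
    unfolding pdz_def by (rule DERIV_imp_deriv)
qed

lemma C1_comp:
  fixes H f1 f2 :: "real \<Rightarrow> real \<Rightarrow> real"
  assumes U: "open U" and W: "open W" and H: "Ck_on 1 W H"
    and c1: "Ck_on 1 U f1" and c2: "Ck_on 1 U f2"
    and img: "\<And>y z. (y,z) \<in> U \<Longrightarrow> (f1 y z, f2 y z) \<in> W"
  shows "Ck_on 1 U (\<lambda>y z. H (f1 y z) (f2 y z))"
proof -
  have dH: "case_prod H differentiable (at (f1 y z, f2 y z))" if "(y,z) \<in> U" for y z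
    using Ck1_diff_at[OF H W img[OF that]] .
  note pc = pd_comp[OF dH Ck1_diff_at[OF c1 U] Ck1_diff_at[OF c2 U]]
  have cf: "continuous_on U (\<lambda>x. (case_prod f1 x, case_prod f2 x))"
    using Ck1_cont[OF c1] Ck1_cont[OF c2] by (auto intro!: continuous_intros)
  have im: "(\<lambda>x. (case_prod f1 x, case_prod f2 x)) ` U \<subseteq> W" using img by auto
  have cHy: "continuous_on U (\<lambda>x. case_prod (pdy H) (case_prod f1 x, case_prod f2 x))"
    by (rule continuous_on_compose2[OF _ cf im]) (use H in \<open>simp add: Ck1_iff\<close>)
  have cHz: "continuous_on U (\<lambda>x. case_prod (pdz H) (case_prod f1 x, case_prod f2 x))"
    by (rule continuous_on_compose2[OF _ cf im]) (use H in \<open>simp add: Ck1_iff\<close>)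
  have c1y: "continuous_on U (case_prod (pdy f1))" and c1z: "continuous_on U (case_prod (pdz f1))"
    and c2y: "continuous_on U (case_prod (pdy f2))" and c2z: "continuous_on U (case_prod (pdz f2))"
    using c1 c2 by (auto simp: Ck1_iff)
  show ?thesis unfolding Ck1_iff
  proof (intro conjI)
    show "(\<lambda>(y,z). H (f1 y z) (f2 y z)) differentiable_on U"
      unfolding differentiable_on_eq_differentiable_at[OF U] using pc(1) by auto
    have "continuous_on U (\<lambda>x. case_prod (pdy H) (case_prod f1 x, case_prod f2 x) * case_prod (pdy f1) x
        + case_prod (pdz H) (case_prod f1 x, case_prod f2 x) * case_prod (pdy f2) x)"
      by (intro continuous_intros cHy cHz c1y c2y)
    thus "continuous_on U (\<lambda>(y,z). pdy (\<lambda>y z. H (f1 y z) (f2 y z)) y z)"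
      by (rule continuous_on_cong[THEN iffD1, rotated 2]) (auto simp: pc(2))
    have "continuous_on U (\<lambda>x. case_prod (pdy H) (case_prod f1 x, case_prod f2 x) * case_prod (pdz f1) x
        + case_prod (pdz H) (case_prod f1 x, case_prod f2 x) * case_prod (pdz f2) x)"
      by (intro continuous_intros cHy cHz c1z c2z)
    thus "continuous_on U (\<lambda>(y,z). pdz (\<lambda>y z. H (f1 y z) (f2 y z)) y z)"
      by (rule continuous_on_cong[THEN iffD1, rotated 2]) (auto simp: pc(3))
  qed
qed

lemma deriv_eqI: "(f has_real_derivative D) (at x) \<Longrightarrow> deriv f x = D"
  by (rule DERIV_imp_deriv)

lemma pd_basic:
  "pdy (\<lambda>a b. a + b) a b = 1" "pdz (\<lambda>a b. a + b) a b = 1"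
  "pdy (\<lambda>a b. a - b) a b = 1" "pdz (\<lambda>a b. a - b) a b = -1"
  "pdy (\<lambda>a b. a * b) a b = b" "pdz (\<lambda>a b. a * b) a b = a"
  "pdy (\<lambda>a b. c) a b = 0" "pdz (\<lambda>a b. c) a b = 0"
  "pdy (\<lambda>a b. a) a b = 1" "pdz (\<lambda>a b. a) a b = 0"
  "pdy (\<lambda>a b. b) a b = 0" "pdz (\<lambda>a b. b) a b = 1"
  unfolding pdy_def pdz_def
  by (auto intro!: deriv_eqI derivative_eq_intros)

lemma pd_div_basic:
  "b \<noteq> 0 \<Longrightarrow> pdy (\<lambda>a b. a / b) a b = 1 / b"
  "b \<noteq> 0 \<Longrightarrow> pdz (\<lambda>a b. a / b) a b = - a / b\<^sup>2"
  unfolding pdy_def pdz_def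
  by (auto intro!: deriv_eqI derivative_eq_intros simp: power2_eq_square field_simps)

lemma pd_sqrt_basic:
  "a > 0 \<Longrightarrow> pdy (\<lambda>a b. sqrt a) a b = 1 / (2 * sqrt a)"
  "pdz (\<lambda>a b. sqrt a) a b = 0"
proof -
  assume a: "a > 0"
  have "(sqrt has_real_derivative inverse (sqrt a) / 2) (at a)" by (rule DERIV_real_sqrt) (use a in simp)
  thus "pdy (\<lambda>a b. sqrt a) a b = 1 / (2 * sqrt a)" unfolding pdy_def
    by (simp add: DERIV_imp_deriv field_simps)
next
  show "pdz (\<lambda>a b. sqrt a) a b = 0" unfolding pdz_def by simp
qed

lemma fst_snd_diff [simp]: "fst differentiable F" "snd differentiable F"
  "fst differentiable_on S" "snd differentiable_on S"
  by (auto intro!: bounded_linear_imp_differentiable bounded_linear_imp_differentiable_on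
      bounded_linear_fst bounded_linear_snd)

lemma C1_basic:
  "Ck_on 1 U (\<lambda>a b. a + b)" "Ck_on 1 U (\<lambda>a b. a - b)" "Ck_on 1 U (\<lambda>a b. a * b)"
  "Ck_on 1 U (\<lambda>a b. c)" "Ck_on 1 U (\<lambda>a b. a)" "Ck_on 1 U (\<lambda>a b. b)"
  unfolding Ck1_iff pd_basic
  by (auto simp: case_prod_beta' intro!: derivative_intros continuous_intros)

lemma C1_div_basic: "Ck_on 1 {(a,b). b \<noteq> (0::real)} (\<lambda>a b. a / b)"
proof -
  have "continuous_on {(a,b). b \<noteq> (0::real)} (\<lambda>(a,b). pdy (\<lambda>a b. a / b) a b)"
    by (rule continuous_on_cong[THEN iffD1, OF refl, of _ "\<lambda>x. 1 / snd x"])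
       (auto simp: pd_div_basic intro!: continuous_intros)
  moreover have "continuous_on {(a,b). b \<noteq> (0::real)} (\<lambda>(a,b). pdz (\<lambda>a b. a / b) a b)"
    by (rule continuous_on_cong[THEN iffD1, OF refl, of _ "\<lambda>x. - fst x / (snd x)\<^sup>2"])
       (auto simp: pd_div_basic intro!: continuous_intros)
  moreover have "(\<lambda>(a,b). a / b) differentiable_on {(a,b). b \<noteq> (0::real)}"
    unfolding differentiable_on_def by (auto simp: case_prod_beta' intro!: differentiable_divide)
  ultimately show ?thesis unfolding Ck1_iff by simp
qed

lemma C1_sqrt_basic: "Ck_on 1 {(a::real,b::real). a > 0} (\<lambda>a b. sqrt a)"
proof -
  have "continuous_on {(a::real,b::real). a > 0} (\<lambda>(a,b). pdy (\<lambda>a b. sqrt a) a b)"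
    by (rule continuous_on_cong[THEN iffD1, OF refl, of _ "\<lambda>x. 1 / (2 * sqrt (fst x))"])
       (auto simp: pd_sqrt_basic intro!: continuous_intros)
  moreover have "continuous_on {(a::real,b::real). a > 0} (\<lambda>(a,b). pdz (\<lambda>a b. sqrt a) a b)"
    by (simp add: pd_sqrt_basic)
  moreover have "(\<lambda>(a,b::real). sqrt a) differentiable_on {(a::real,b::real). a > 0}"
    unfolding differentiable_on_def
  proof
    fix x :: "real \<times> real" assume "x \<in> {(a,b). a > 0}"
    hence "sqrt differentiable (at (fst x))" using DERIV_real_sqrt real_differentiable_def
      by (fastforce simp: case_prod_beta')
    hence "(\<lambda>x. sqrt (fst x)) differentiable (at x)" by (rule differentiable_compose) simp
    thus "(\<lambda>(a,b). sqrt a) differentiable (at x within {(a,b). a > 0})"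
      by (simp add: case_prod_beta' differentiable_at_withinI)
  qed
  ultimately show ?thesis unfolding Ck1_iff by simp
qed



lemma square_in_ball:
  fixes x0 y0 d a b :: real
  assumes "d > 0" "x0 \<le> a" "a \<le> x0 + d/2" "y0 \<le> b" "b \<le> y0 + d/2"
  shows "dist (a,b) (x0,y0) < d"
proof -
  have "(dist a x0)\<^sup>2 \<le> (d/2)\<^sup>2" using assms by (simp add: dist_real_def power_mono)
  moreover have "(dist b y0)\<^sup>2 \<le> (d/2)\<^sup>2" using assms by (simp add: dist_real_def power_mono)
  moreover have "(d/2)\<^sup>2 * 2 < d\<^sup>2" using assms(1) by (simp add: power2_eq_square)
  ultimately have "(dist a x0)\<^sup>2 + (dist b y0)\<^sup>2 < d\<^sup>2" by linarith
  hence "sqrt ((dist a x0)\<^sup>2 + (dist b y0)\<^sup>2) < sqrt (d\<^sup>2)" by (simp only: real_sqrt_less_iff)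
  thus ?thesis using assms(1) by (simp add: dist_Pair_Pair)
qed

lemma schwarz_core:
  fixes f f1 f2 f12 f21 :: "real \<Rightarrow> real \<Rightarrow> real"
  assumes S: "open S" and p0: "(x0,y0) \<in> S"
    and d1: "\<And>a b. (a,b) \<in> S \<Longrightarrow> ((\<lambda>t. f t b) has_real_derivative f1 a b) (at a)"
    and d2: "\<And>a b. (a,b) \<in> S \<Longrightarrow> ((\<lambda>t. f a t) has_real_derivative f2 a b) (at b)"
    and d12: "\<And>a b. (a,b) \<in> S \<Longrightarrow> ((\<lambda>t. f1 a t) has_real_derivative f12 a b) (at b)"
    and d21: "\<And>a b. (a,b) \<in> S \<Longrightarrow> ((\<lambda>t. f2 t b) has_real_derivative f21 a b) (at a)"
    and c12: "continuous_on S (case_prod f12)" and c21: "continuous_on S (case_prod f21)"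
  shows "f12 x0 y0 = f21 x0 y0"
proof (rule ccontr)
  assume ne: "f12 x0 y0 \<noteq> f21 x0 y0"
  define e where "e = \<bar>f12 x0 y0 - f21 x0 y0\<bar> / 2"
  have e: "e > 0" using ne by (simp add: e_def)
  have "isCont (case_prod f12) (x0,y0)" using c12 S p0 continuous_on_eq_continuous_at by blast
  then obtain da where da: "da > 0" "\<And>x'. dist x' (x0,y0) < da \<Longrightarrow> dist (case_prod f12 x') (f12 x0 y0) < e"
    using e unfolding continuous_at_eps_delta by force
  have "isCont (case_prod f21) (x0,y0)" using c21 S p0 continuous_on_eq_continuous_at by blast
  then obtain db where db: "db > 0" "\<And>x'. dist x' (x0,y0) < db \<Longrightarrow> dist (case_prod f21 x') (f21 x0 y0) < e"
    using e unfolding continuous_at_eps_delta by force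
  obtain dc where dc: "dc > 0" "ball (x0,y0) dc \<subseteq> S" using S p0 open_contains_ball by blast
  define d where "d = min da (min db dc)"
  have d: "d > 0" "d \<le> da" "d \<le> db" "d \<le> dc" using da db dc by (auto simp: d_def)
  define h where "h = d / 2"
  have h: "h > 0" using d by (simp add: h_def)
  have inS: "(a,b) \<in> S" if "x0 \<le> a" "a \<le> x0 + h" "y0 \<le> b" "b \<le> y0 + h" for a b
  proof -
    have "dist (a,b) (x0,y0) < d" using square_in_ball[OF d(1)] that by (simp add: h_def)
    hence "(a,b) \<in> ball (x0,y0) dc" using d by (simp add: dist_commute)
    thus ?thesis using dc by blast
  qed
  have ind: "dist (a,b) (x0,y0) < d" if "x0 \<le> a" "a \<le> x0 + h" "y0 \<le> b" "b \<le> y0 + h" for a b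
    using square_in_ball[OF d(1)] that by (simp add: h_def)
  define D where "D = f (x0+h) (y0+h) - f (x0+h) y0 - f x0 (y0+h) + f x0 y0"
  obtain xi where xi: "x0 < xi" "xi < x0 + h"
    "(f (x0+h) (y0+h) - f (x0+h) y0) - (f x0 (y0+h) - f x0 y0) = h * (f1 xi (y0+h) - f1 xi y0)"
  proof -
    have "\<exists>z. x0 < z \<and> z < x0 + h \<and> (\<lambda>t. f t (y0+h) - f t y0) (x0+h) - (\<lambda>t. f t (y0+h) - f t y0) x0
          = (x0 + h - x0) * (f1 z (y0+h) - f1 z y0)"
      by (rule MVT2) (use h in \<open>auto intro!: derivative_eq_intros d1 inS\<close>)
    thus ?thesis using that by auto
  qed
  obtain eta where eta: "y0 < eta" "eta < y0 + h" "f1 xi (y0+h) - f1 xi y0 = h * f12 xi eta"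
  proof -
    have "\<exists>z. y0 < z \<and> z < y0 + h \<and> f1 xi (y0+h) - f1 xi y0 = (y0 + h - y0) * f12 xi z"
      by (rule MVT2) (use h xi in \<open>auto intro!: d12 inS\<close>)
    thus ?thesis using that by auto
  qed
  have D1: "D = h * h * f12 xi eta" using xi eta by (simp add: D_def algebra_simps)
  obtain eta' where eta': "y0 < eta'" "eta' < y0 + h"
    "(f (x0+h) (y0+h) - f x0 (y0+h)) - (f (x0+h) y0 - f x0 y0) = h * (f2 (x0+h) eta' - f2 x0 eta')"
  proof -
    have "\<exists>z. y0 < z \<and> z < y0 + h \<and> (\<lambda>t. f (x0+h) t - f x0 t) (y0+h) - (\<lambda>t. f (x0+h) t - f x0 t) y0
          = (y0 + h - y0) * (f2 (x0+h) z - f2 x0 z)"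
      by (rule MVT2) (use h in \<open>auto intro!: derivative_eq_intros d2 inS\<close>)
    thus ?thesis using that by auto
  qed
  obtain xi' where xi': "x0 < xi'" "xi' < x0 + h" "f2 (x0+h) eta' - f2 x0 eta' = h * f21 xi' eta'"
  proof -
    have "\<exists>z. x0 < z \<and> z < x0 + h \<and> f2 (x0+h) eta' - f2 x0 eta' = (x0 + h - x0) * f21 z eta'"
      by (rule MVT2) (use h eta' in \<open>auto intro!: d21 inS\<close>)
    thus ?thesis using that by auto
  qed
  have D2: "D = h * h * f21 xi' eta'" using xi' eta' by (simp add: D_def algebra_simps)
  have eq: "f12 xi eta = f21 xi' eta'" using D1 D2 h by simp
  have "dist (f12 xi eta) (f12 x0 y0) < e"
    using da(2)[of "(xi,eta)"] ind[of xi eta] xi eta d by simp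
  moreover have "dist (f21 xi' eta') (f21 x0 y0) < e"
    using db(2)[of "(xi',eta')"] ind[of xi' eta'] xi' eta' d by simp
  ultimately have "\<bar>f12 x0 y0 - f21 x0 y0\<bar> < 2 * e"
    using eq by (simp add: dist_real_def)
  thus False by (simp add: e_def)
qed


lemma schwarz_pd:
  fixes f :: "real \<Rightarrow> real \<Rightarrow> real"
  assumes S: "open S" and p: "(y,z) \<in> S" and df: "case_prod f differentiable_on S"
    and c1: "Ck_on 1 S (pdy f)" and c2: "Ck_on 1 S (pdz f)"
  shows "pdz (pdy f) y z = pdy (pdz f) y z"
proof (rule schwarz_core[OF S p])
  have da: "case_prod f differentiable at (a,b)" if "(a,b) \<in> S" for a b
    using df S that by (auto simp: differentiable_on_eq_differentiable_at)
  show "((\<lambda>t. f t b) has_real_derivative pdy f a b) (at a)" if "(a,b) \<in> S" for a b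
    using partials_from_diff(1)[OF da[OF that]] .
  show "((\<lambda>t. f a t) has_real_derivative pdz f a b) (at b)" if "(a,b) \<in> S" for a b
    using partials_from_diff(2)[OF da[OF that]] .
  show "((\<lambda>t. pdy f a t) has_real_derivative pdz (pdy f) a b) (at b)" if "(a,b) \<in> S" for a b
    using partials_from_diff(2)[OF Ck1_diff_at[OF c1 S that]] .
  show "((\<lambda>t. pdz f t b) has_real_derivative pdy (pdz f) a b) (at a)" if "(a,b) \<in> S" for a b
    using partials_from_diff(1)[OF Ck1_diff_at[OF c2 S that]] .
  show "continuous_on S (case_prod (pdz (pdy f)))" using c1 by (simp add: Ck1_iff)
  show "continuous_on S (case_prod (pdy (pdz f)))" using c2 by (simp add: Ck1_iff)
qed

lemma open_neq0: "open {(a::real,b::real). b \<noteq> 0}"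
proof -
  have "{(a::real,b::real). b \<noteq> 0} = (UNIV::real set) \<times> (-{0})" by auto
  thus ?thesis using open_Times[OF open_UNIV open_Compl[OF closed_singleton[of 0]]] by simp
qed

lemma open_pos1: "open {(a::real,b::real). a > 0}"
proof -
  have "{(a::real,b::real). a > 0} = {0<..} \<times> (UNIV::real set)" by auto
  thus ?thesis by (simp add: open_Times)
qed

lemma C1_add: "open U \<Longrightarrow> Ck_on 1 U f \<Longrightarrow> Ck_on 1 U g \<Longrightarrow> Ck_on 1 U (\<lambda>y z. f y z + g y z)"
  using C1_comp[of U UNIV "\<lambda>a b. a + b" f g] C1_basic by simp
lemma C1_sub: "open U \<Longrightarrow> Ck_on 1 U f \<Longrightarrow> Ck_on 1 U g \<Longrightarrow> Ck_on 1 U (\<lambda>y z. f y z - g y z)"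
  using C1_comp[of U UNIV "\<lambda>a b. a - b" f g] C1_basic by simp
lemma C1_mult: "open U \<Longrightarrow> Ck_on 1 U f \<Longrightarrow> Ck_on 1 U g \<Longrightarrow> Ck_on 1 U (\<lambda>y z. f y z * g y z)"
  using C1_comp[of U UNIV "\<lambda>a b. a * b" f g] C1_basic by simp
lemma C1_div: "open U \<Longrightarrow> Ck_on 1 U f \<Longrightarrow> Ck_on 1 U g \<Longrightarrow> (\<And>y z. (y,z) \<in> U \<Longrightarrow> g y z \<noteq> 0)
   \<Longrightarrow> Ck_on 1 U (\<lambda>y z. f y z / g y z)"
  using C1_comp[of U "{(a,b). b \<noteq> 0}" "\<lambda>a b. a / b" f g] C1_div_basic open_neq0 by simp
lemma C1_sqrt: "open U \<Longrightarrow> Ck_on 1 U f \<Longrightarrow> (\<And>y z. (y,z) \<in> U \<Longrightarrow> f y z > 0)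
   \<Longrightarrow> Ck_on 1 U (\<lambda>y z. sqrt (f y z))"
  using C1_comp[of U "{(a,b). a > 0}" "\<lambda>a b. sqrt a" f f] C1_sqrt_basic open_pos1 by simp
lemma C1_const: "Ck_on 1 U (\<lambda>y z. c)" using C1_basic(4) .

lemma pdy_eqI: "((\<lambda>t. f t z) has_real_derivative A) (at y) \<Longrightarrow> pdy f y z = A"
  unfolding pdy_def by (rule DERIV_imp_deriv)
lemma pdz_eqI: "((\<lambda>t. f y t) has_real_derivative A) (at z) \<Longrightarrow> pdz f y z = A"
  unfolding pdz_def by (rule DERIV_imp_deriv)



lemma DERIV_Hp:
  assumes "(f has_real_derivative f') (at x)" "(g has_real_derivative g') (at x)" "1 - f x * g x \<noteq> 0"
  shows "((\<lambda>t. (f t + g t) / (1 - f t * g t)) has_real_derivative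
           ((1 + (g x)\<^sup>2) * f' + (1 + (f x)\<^sup>2) * g') / (1 - f x * g x)\<^sup>2) (at x)"
proof -
  have ne: "f x * g x \<noteq> 1" using assms(3) by simp
  have "((\<lambda>t. (f t + g t) / (1 - f t * g t)) has_real_derivative
           ((f' + g') * (1 - f x * g x) - (f x + g x) * (- (f' * g x + f x * g'))) / (1 - f x * g x)\<^sup>2) (at x)"
    by (rule DERIV_divide[THEN DERIV_cong]) (auto intro!: derivative_eq_intros assms simp: power2_eq_square ne)
  moreover have "((f' + g') * (1 - f x * g x) - (f x + g x) * (- (f' * g x + f x * g')))
     = ((1 + (g x)\<^sup>2) * f' + (1 + (f x)\<^sup>2) * g')"
    by (simp add: algebra_simps power2_eq_square)
  ultimately show ?thesis by simp
qed


lemma DERIV_Hq: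
  assumes "(f has_real_derivative f') (at x)" "(g has_real_derivative g') (at x)" "1 - f x * g x \<noteq> 0"
  shows "((\<lambda>t. (g t - f t) / (1 - f t * g t)) has_real_derivative
           (((g x)\<^sup>2 - 1) * f' + (1 - (f x)\<^sup>2) * g') / (1 - f x * g x)\<^sup>2) (at x)"
proof -
  have ne: "f x * g x \<noteq> 1" using assms(3) by simp
  have "((\<lambda>t. (g t - f t) / (1 - f t * g t)) has_real_derivative
           ((g' - f') * (1 - f x * g x) - (g x - f x) * (- (f' * g x + f x * g'))) / (1 - f x * g x)\<^sup>2) (at x)"
    by (rule DERIV_divide[THEN DERIV_cong]) (auto intro!: derivative_eq_intros assms simp: power2_eq_square ne)
  moreover have "((g' - f') * (1 - f x * g x) - (g x - f x) * (- (f' * g x + f x * g')))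
     = (((g x)\<^sup>2 - 1) * f' + (1 - (f x)\<^sup>2) * g')"
    by (simp add: algebra_simps power2_eq_square)
  ultimately show ?thesis by simp
qed

lemma BI_poly:
  fixes r s ry rz sy sz :: real
  shows "((1 - r * s)\<^sup>2 - (s - r)\<^sup>2) * ((1 + s\<^sup>2) * ry + (1 + r\<^sup>2) * sy)
     + 2 * ((r + s) * (s - r)) * ((1 + s\<^sup>2) * rz + (1 + r\<^sup>2) * sz)
     - ((1 - r * s)\<^sup>2 + (r + s)\<^sup>2) * ((s\<^sup>2 - 1) * rz + (1 - r\<^sup>2) * sz)
   = (1 - r\<^sup>2) * (1 + s\<^sup>2) * ((1 + s\<^sup>2) * rz + (1 - s\<^sup>2) * ry)
      - (1 + r\<^sup>2) * (1 - s\<^sup>2) * ((1 + r\<^sup>2) * sz - (1 - r\<^sup>2) * sy)"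
  by (simp add: algebra_simps power2_eq_square)

lemma BI_frac:
  fixes D P Q Y Z W :: real
  assumes "D \<noteq> 0"
  shows "(1 - (Q / D)\<^sup>2) * (Y / D\<^sup>2) + 2 * (P / D) * (Q / D) * (Z / D\<^sup>2) - (1 + (P / D)\<^sup>2) * (W / D\<^sup>2)
     = ((D\<^sup>2 - Q\<^sup>2) * Y + 2 * (P * Q) * Z - (D\<^sup>2 + P\<^sup>2) * W) / D ^ 4"
proof -
  have d2: "D\<^sup>2 \<noteq> 0" using assms by simp
  have 1: "1 - (Q / D)\<^sup>2 = (D\<^sup>2 - Q\<^sup>2) / D\<^sup>2" using d2 by (simp add: power_divide diff_divide_distrib)
  have 2: "1 + (P / D)\<^sup>2 = (D\<^sup>2 + P\<^sup>2) / D\<^sup>2" using d2 by (simp add: power_divide add_divide_distrib)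
  have 3: "2 * (P / D) * (Q / D) = 2 * (P * Q) / D\<^sup>2" by (simp add: power2_eq_square)
  have 4: "D ^ 4 = D\<^sup>2 * D\<^sup>2" by (simp add: power2_eq_square power4_eq_xxxx)
  have "(1 - (Q / D)\<^sup>2) * (Y / D\<^sup>2) + 2 * (P / D) * (Q / D) * (Z / D\<^sup>2) - (1 + (P / D)\<^sup>2) * (W / D\<^sup>2)
     = ((D\<^sup>2 - Q\<^sup>2) / D\<^sup>2) * (Y / D\<^sup>2) + (2 * (P * Q) / D\<^sup>2) * (Z / D\<^sup>2) - ((D\<^sup>2 + P\<^sup>2) / D\<^sup>2) * (W / D\<^sup>2)"
    by (simp only: 1 2 3)
  also have "\<dots> = ((D\<^sup>2 - Q\<^sup>2) * Y) / (D\<^sup>2 * D\<^sup>2) + (2 * (P * Q) * Z) / (D\<^sup>2 * D\<^sup>2) - ((D\<^sup>2 + P\<^sup>2) * W) / (D\<^sup>2 * D\<^sup>2)"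
    by (simp only: times_divide_times_eq)
  also have "\<dots> = ((D\<^sup>2 - Q\<^sup>2) * Y + 2 * (P * Q) * Z - (D\<^sup>2 + P\<^sup>2) * W) / (D\<^sup>2 * D\<^sup>2)"
    by (simp only: add_divide_distrib[symmetric] diff_divide_distrib[symmetric])
  finally show ?thesis by (simp only: 4)
qed


lemma BI_identity:
  fixes r s ry rz sy sz :: real
  assumes "1 - r * s \<noteq> 0"
  shows "(1 - ((s - r)/(1 - r * s))\<^sup>2) * (((1 + s\<^sup>2) * ry + (1 + r\<^sup>2) * sy) / (1 - r * s)\<^sup>2)
     + 2 * ((r + s)/(1 - r * s)) * ((s - r)/(1 - r * s)) * (((1 + s\<^sup>2) * rz + (1 + r\<^sup>2) * sz) / (1 - r * s)\<^sup>2)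
     - (1 + ((r + s)/(1 - r * s))\<^sup>2) * (((s\<^sup>2 - 1) * rz + (1 - r\<^sup>2) * sz) / (1 - r * s)\<^sup>2)
   = ((1 - r\<^sup>2) * (1 + s\<^sup>2) * ((1 + s\<^sup>2) * rz + (1 - s\<^sup>2) * ry)
      - (1 + r\<^sup>2) * (1 - s\<^sup>2) * ((1 + r\<^sup>2) * sz - (1 - r\<^sup>2) * sy)) / (1 - r * s)^4"
  unfolding BI_frac[OF assms] BI_poly[symmetric] ..

lemma Ck2_iff: "Ck_on 2 U f \<longleftrightarrow> (case_prod f differentiable_on U \<and> Ck_on 1 U (pdy f) \<and> Ck_on 1 U (pdz f))"
  by (metis Ck_on.simps(2) Suc_1)

lemma pdy_unique:
  fixes f g :: "real \<Rightarrow> real \<Rightarrow> real"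
  assumes "open U" "(y,z) \<in> U" "\<And>a b. (a,b) \<in> U \<Longrightarrow> f a b = g a b"
    "((\<lambda>t. f t z) has_real_derivative X) (at y)" "((\<lambda>t. g t z) has_real_derivative Y) (at y)"
  shows "X = Y"
  using pd_cong(1)[of U y z f g, OF assms(1-3)] pdy_eqI[where f=f and y=y and z=z, OF assms(4)] pdy_eqI[where f=g and y=y and z=z, OF assms(5)] by simp

lemma pdz_unique:
  fixes f g :: "real \<Rightarrow> real \<Rightarrow> real"
  assumes "open U" "(y,z) \<in> U" "\<And>a b. (a,b) \<in> U \<Longrightarrow> f a b = g a b"
    "((\<lambda>t. f y t) has_real_derivative X) (at z)" "((\<lambda>t. g y t) has_real_derivative Y) (at z)"
  shows "X = Y"
  using pd_cong(2)[of U y z f g, OF assms(1-3)] pdz_eqI[where f=f and y=y and z=z, OF assms(4)] pdz_eqI[where f=g and y=y and z=z, OF assms(5)] by simp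



lemma conv_alg:
  fixes a b c d r s :: real
  assumes e1: "a - s\<^sup>2 * b = 1" and e2: "b - r\<^sup>2 * a = 1"
    and e3: "c - s\<^sup>2 * d = -1" and e4: "d - r\<^sup>2 * c = 1"
  shows "1 - r * s \<noteq> 0" "1 + r * s \<noteq> 0" "a \<noteq> 0" "b \<noteq> 0"
    "r * a + s * b = (r + s) / (1 - r * s)"
    "r * c + s * d = (s - r) / (1 - r * s)"
    "(1 + s\<^sup>2) * c + (1 - s\<^sup>2) * a = 0"
    "(1 + r\<^sup>2) * d - (1 - r\<^sup>2) * b = 0"
proof -
  have ha: "a * (1 - r\<^sup>2 * s\<^sup>2) = 1 + s\<^sup>2" using e1 e2 by algebra
  have hb: "b * (1 - r\<^sup>2 * s\<^sup>2) = 1 + r\<^sup>2" using e1 e2 by algebra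
  have hc: "c * (1 - r\<^sup>2 * s\<^sup>2) = s\<^sup>2 - 1" using e3 e4 by algebra
  have hd: "d * (1 - r\<^sup>2 * s\<^sup>2) = 1 - r\<^sup>2" using e3 e4 by algebra
  have pos: "1 + s\<^sup>2 > 0" "1 + r\<^sup>2 > 0" by (auto intro: add_pos_nonneg)
  have k: "1 - r\<^sup>2 * s\<^sup>2 \<noteq> 0" using ha pos by auto
  have kk: "1 - r\<^sup>2 * s\<^sup>2 = (1 - r * s) * (1 + r * s)" by (simp add: algebra_simps power2_eq_square)
  show k1: "1 - r * s \<noteq> 0" using k kk by auto
  show k2: "1 + r * s \<noteq> 0" using k kk by auto
  show "a \<noteq> 0" using ha pos by auto
  show "b \<noteq> 0" using hb pos by auto
  have A: "a = (1 + s\<^sup>2) / (1 - r\<^sup>2 * s\<^sup>2)" using ha k by (simp add: field_simps)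
  have B: "b = (1 + r\<^sup>2) / (1 - r\<^sup>2 * s\<^sup>2)" using hb k by (simp add: field_simps)
  have C: "c = (s\<^sup>2 - 1) / (1 - r\<^sup>2 * s\<^sup>2)" using hc k by (simp add: field_simps)
  have D: "d = (1 - r\<^sup>2) / (1 - r\<^sup>2 * s\<^sup>2)" using hd k by (simp add: field_simps)
  have "r * a + s * b = (r * (1 + s\<^sup>2) + s * (1 + r\<^sup>2)) / (1 - r\<^sup>2 * s\<^sup>2)"
    unfolding A B by (simp only: times_divide_eq_right add_divide_distrib[symmetric])
  also have "\<dots> = ((r + s) * (1 + r * s)) / ((1 - r * s) * (1 + r * s))"
    unfolding kk by (simp add: algebra_simps power2_eq_square)
  also have "\<dots> = (r + s) / (1 - r * s)" using k2 by simp
  finally show "r * a + s * b = (r + s) / (1 - r * s)" .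
  have "r * c + s * d = (r * (s\<^sup>2 - 1) + s * (1 - r\<^sup>2)) / (1 - r\<^sup>2 * s\<^sup>2)"
    unfolding C D by (simp only: times_divide_eq_right add_divide_distrib[symmetric])
  also have "\<dots> = ((s - r) * (1 + r * s)) / ((1 - r * s) * (1 + r * s))"
    unfolding kk by (simp add: algebra_simps power2_eq_square)
  also have "\<dots> = (s - r) / (1 - r * s)" using k2 by simp
  finally show "r * c + s * d = (s - r) / (1 - r * s)" .
  show "(1 + s\<^sup>2) * c + (1 - s\<^sup>2) * a = 0"
    unfolding A C using k by (simp add: field_simps)
  show "(1 + r\<^sup>2) * d - (1 - r\<^sup>2) * b = 0"
    unfolding B D using k by (simp add: field_simps)
qed


lemma chain_y: "(h has_real_derivative Dh) (at (f y z)) \<Longrightarrow> ((\<lambda>t. f t z) has_real_derivative Df) (at y)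
   \<Longrightarrow> ((\<lambda>t. h (f t z)) has_real_derivative Dh * Df) (at y)"
  by (rule DERIV_chain2[where f=h and g="\<lambda>t. f t z"]) simp_all
lemma chain_z: "(h has_real_derivative Dh) (at (f y z)) \<Longrightarrow> ((\<lambda>t. f y t) has_real_derivative Df) (at z)
   \<Longrightarrow> ((\<lambda>t. h (f y t)) has_real_derivative Dh * Df) (at z)"
  by (rule DERIV_chain2[where f=h and g="\<lambda>t. f y t"]) simp_all

lemma C1_Hp: "open U \<Longrightarrow> Ck_on 1 U r \<Longrightarrow> Ck_on 1 U s \<Longrightarrow> (\<And>y z. (y,z) \<in> U \<Longrightarrow> 1 - r y z * s y z \<noteq> 0)
  \<Longrightarrow> Ck_on 1 U (\<lambda>y z. (r y z + s y z) / (1 - r y z * s y z))"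
  by (intro C1_div C1_add C1_sub C1_mult C1_const) auto
lemma C1_Hq: "open U \<Longrightarrow> Ck_on 1 U r \<Longrightarrow> Ck_on 1 U s \<Longrightarrow> (\<And>y z. (y,z) \<in> U \<Longrightarrow> 1 - r y z * s y z \<noteq> 0)
  \<Longrightarrow> Ck_on 1 U (\<lambda>y z. (s y z - r y z) / (1 - r y z * s y z))"
  by (intro C1_div C1_add C1_sub C1_mult C1_const) auto

lemma converse_main:
  fixes psi r s :: "real \<Rightarrow> real \<Rightarrow> real" and F G A B C D :: "real \<Rightarrow> real"
  assumes U: "open U" and pc: "param_chart U r s" and rep: "BI_rep psi U r s F G A B C D"
  shows "Ck_on 2 U psi \<and> (\<forall>(y,z)\<in>U. BI_eq psi y z)"
proof -
  from rep obtain I J where I: "open I" and J: "open J"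
    and IJ: "\<forall>(y, z)\<in>U. r y z \<in> I \<and> s y z \<in> J"
    and F2: "C2_on1 I F" and G2: "C2_on1 J G"
    and dA: "\<forall>x\<in>J. (A has_real_derivative x\<^sup>2 * deriv G x) (at x)"
    and dB: "\<forall>x\<in>I. (B has_real_derivative x\<^sup>2 * deriv F x) (at x)"
    and dC: "\<forall>x\<in>I. (C has_real_derivative x * deriv F x) (at x)"
    and dD: "\<forall>x\<in>J. (D has_real_derivative x * deriv G x) (at x)"
    and eqs: "\<forall>(y, z)\<in>U. y - z = F (r y z) - A (s y z) \<and> y + z = G (s y z) - B (r y z)
                 \<and> psi y z = C (r y z) + D (s y z)"
    unfolding BI_rep_def by blast
  have cr: "Ck_on 1 U r" and cs: "Ck_on 1 U s" using pc by (auto simp: param_chart_def)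
  have rI: "r y z \<in> I" and sJ: "s y z \<in> J" if "(y,z) \<in> U" for y z using IJ that by auto
  have eq1: "y - z = F (r y z) - A (s y z)" and eq2: "y + z = G (s y z) - B (r y z)"
    and eq3: "psi y z = C (r y z) + D (s y z)" if "(y,z) \<in> U" for y z using eqs that by auto
  have dF: "(F has_real_derivative deriv F x) (at x)" if "x \<in> I" for x
    using F2 I that by (auto simp: C2_on1_def differentiable_on_eq_differentiable_at DERIV_deriv_iff_real_differentiable)
  have dG: "(G has_real_derivative deriv G x) (at x)" if "x \<in> J" for x
    using G2 J that by (auto simp: C2_on1_def differentiable_on_eq_differentiable_at DERIV_deriv_iff_real_differentiable)
  have key: "1 - r y z * s y z \<noteq> 0
     \<and> pdy psi y z = (r y z + s y z) / (1 - r y z * s y z)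
     \<and> pdz psi y z = (s y z - r y z) / (1 - r y z * s y z)
     \<and> (1 + (s y z)\<^sup>2) * pdz r y z + (1 - (s y z)\<^sup>2) * pdy r y z = 0
     \<and> (1 + (r y z)\<^sup>2) * pdz s y z - (1 - (r y z)\<^sup>2) * pdy s y z = 0" if yz: "(y,z) \<in> U" for y z
  proof -
    let ?r = "r y z" and ?s = "s y z"
    have ry: "((\<lambda>t. r t z) has_real_derivative pdy r y z) (at y)"
      using partials_from_diff(1)[OF Ck1_diff_at[OF cr U yz]] .
    have rz: "((\<lambda>t. r y t) has_real_derivative pdz r y z) (at z)"
      using partials_from_diff(2)[OF Ck1_diff_at[OF cr U yz]] .
    have sy: "((\<lambda>t. s t z) has_real_derivative pdy s y z) (at y)"
      using partials_from_diff(1)[OF Ck1_diff_at[OF cs U yz]] .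
    have sz: "((\<lambda>t. s y t) has_real_derivative pdz s y z) (at z)"
      using partials_from_diff(2)[OF Ck1_diff_at[OF cs U yz]] .
    have Fr: "(F has_real_derivative deriv F ?r) (at ?r)" using dF rI[OF yz] .
    have Gs: "(G has_real_derivative deriv G ?s) (at ?s)" using dG sJ[OF yz] .
    have As: "(A has_real_derivative ?s\<^sup>2 * deriv G ?s) (at ?s)" using dA sJ[OF yz] by blast
    have Br: "(B has_real_derivative ?r\<^sup>2 * deriv F ?r) (at ?r)" using dB rI[OF yz] by blast
    have Cr: "(C has_real_derivative ?r * deriv F ?r) (at ?r)" using dC rI[OF yz] by blast
    have Ds: "(D has_real_derivative ?s * deriv G ?s) (at ?s)" using dD sJ[OF yz] by blast
    have e1: "deriv F ?r * pdy r y z - ?s\<^sup>2 * (deriv G ?s * pdy s y z) = 1"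
    proof -
      have "((\<lambda>t. F (r t z) - A (s t z)) has_real_derivative
              deriv F ?r * pdy r y z - ?s\<^sup>2 * deriv G ?s * pdy s y z) (at y)"
        by (intro DERIV_diff chain_y[where f=r] chain_y[where f=s] Fr As ry sy)
      moreover have "((\<lambda>t. t - z) has_real_derivative 1) (at y)" by (auto intro!: derivative_eq_intros)
      ultimately show ?thesis
        using pdy_unique[OF U yz, of "\<lambda>a b. F (r a b) - A (s a b)" "\<lambda>a b. a - b"] eq1 by (simp add: mult.assoc)
    qed
    have e2: "deriv G ?s * pdy s y z - ?r\<^sup>2 * (deriv F ?r * pdy r y z) = 1"
    proof -
      have "((\<lambda>t. G (s t z) - B (r t z)) has_real_derivative
              deriv G ?s * pdy s y z - ?r\<^sup>2 * deriv F ?r * pdy r y z) (at y)"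
        by (intro DERIV_diff chain_y[where f=r] chain_y[where f=s] Gs Br ry sy)
      moreover have "((\<lambda>t. t + z) has_real_derivative 1) (at y)" by (auto intro!: derivative_eq_intros)
      ultimately show ?thesis
        using pdy_unique[OF U yz, of "\<lambda>a b. G (s a b) - B (r a b)" "\<lambda>a b. a + b"] eq2 by (simp add: mult.assoc)
    qed
    have e3: "deriv F ?r * pdz r y z - ?s\<^sup>2 * (deriv G ?s * pdz s y z) = -1"
    proof -
      have "((\<lambda>t. F (r y t) - A (s y t)) has_real_derivative
              deriv F ?r * pdz r y z - ?s\<^sup>2 * deriv G ?s * pdz s y z) (at z)"
        by (intro DERIV_diff chain_z[where f=r] chain_z[where f=s] Fr As rz sz)
      moreover have "((\<lambda>t. y - t) has_real_derivative -1) (at z)" by (auto intro!: derivative_eq_intros)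
      ultimately show ?thesis
        using pdz_unique[OF U yz, of "\<lambda>a b. F (r a b) - A (s a b)" "\<lambda>a b. a - b"] eq1 by (simp add: mult.assoc)
    qed
    have e4: "deriv G ?s * pdz s y z - ?r\<^sup>2 * (deriv F ?r * pdz r y z) = 1"
    proof -
      have "((\<lambda>t. G (s y t) - B (r y t)) has_real_derivative
              deriv G ?s * pdz s y z - ?r\<^sup>2 * deriv F ?r * pdz r y z) (at z)"
        by (intro DERIV_diff chain_z[where f=r] chain_z[where f=s] Gs Br rz sz)
      moreover have "((\<lambda>t. y + t) has_real_derivative 1) (at z)" by (auto intro!: derivative_eq_intros)
      ultimately show ?thesis
        using pdz_unique[OF U yz, of "\<lambda>a b. G (s a b) - B (r a b)" "\<lambda>a b. a + b"] eq2 by (simp add: mult.assoc)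
    qed
    note alg = conv_alg[OF e1 e2 e3 e4]
    have py: "pdy psi y z = ?r * (deriv F ?r * pdy r y z) + ?s * (deriv G ?s * pdy s y z)"
    proof -
      have "((\<lambda>t. C (r t z) + D (s t z)) has_real_derivative
              ?r * deriv F ?r * pdy r y z + ?s * deriv G ?s * pdy s y z) (at y)"
        by (intro DERIV_add chain_y[where f=r] chain_y[where f=s] Cr Ds ry sy)
      hence "pdy (\<lambda>a b. C (r a b) + D (s a b)) y z = ?r * deriv F ?r * pdy r y z + ?s * deriv G ?s * pdy s y z"
        by (rule pdy_eqI)
      moreover have "pdy psi y z = pdy (\<lambda>a b. C (r a b) + D (s a b)) y z"
        by (rule pd_cong(1)[OF U yz]) (use eq3 in auto)
      ultimately show ?thesis by (simp add: mult.assoc)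
    qed
    have pz: "pdz psi y z = ?r * (deriv F ?r * pdz r y z) + ?s * (deriv G ?s * pdz s y z)"
    proof -
      have "((\<lambda>t. C (r y t) + D (s y t)) has_real_derivative
              ?r * deriv F ?r * pdz r y z + ?s * deriv G ?s * pdz s y z) (at z)"
        by (intro DERIV_add chain_z[where f=r] chain_z[where f=s] Cr Ds rz sz)
      hence "pdz (\<lambda>a b. C (r a b) + D (s a b)) y z = ?r * deriv F ?r * pdz r y z + ?s * deriv G ?s * pdz s y z"
        by (rule pdz_eqI)
      moreover have "pdz psi y z = pdz (\<lambda>a b. C (r a b) + D (s a b)) y z"
        by (rule pd_cong(2)[OF U yz]) (use eq3 in auto)
      ultimately show ?thesis by (simp add: mult.assoc)
    qed
    have Fne: "deriv F ?r \<noteq> 0" using alg(3) by auto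
    have Gne: "deriv G ?s \<noteq> 0" using alg(4) by auto
    have a1: "deriv F ?r * ((1 + ?s\<^sup>2) * pdz r y z + (1 - ?s\<^sup>2) * pdy r y z) = 0"
      using alg(7) by (simp add: algebra_simps)
    have a2: "deriv G ?s * ((1 + ?r\<^sup>2) * pdz s y z - (1 - ?r\<^sup>2) * pdy s y z) = 0"
      using alg(8) by (simp add: algebra_simps)
    show ?thesis using alg(1,5,6) py pz a1 a2 Fne Gne by simp
  qed
  have nz: "1 - r y z * s y z \<noteq> 0" if "(y,z) \<in> U" for y z using key[OF that] by blast
  have diffpsi: "case_prod psi differentiable_on U"
  proof (rule diff_on_cong[OF U, of "\<lambda>a b. C (r a b) + D (s a b)"])
    show "C (r a b) + D (s a b) = psi a b" if "(a,b) \<in> U" for a b using eq3[OF that] by simp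
    show "(\<lambda>(a,b). C (r a b) + D (s a b)) differentiable_on U"
      unfolding differentiable_on_eq_differentiable_at[OF U]
    proof
      fix x assume x: "x \<in> U"
      obtain y z where xyz: "x = (y,z)" by fastforce
      have C': "C differentiable (at (case_prod r x))"
        using dC rI[of y z] x xyz real_differentiable_def by fastforce
      have D': "D differentiable (at (case_prod s x))"
        using dD sJ[of y z] x xyz real_differentiable_def by fastforce
      have dr: "case_prod r differentiable (at x)" using Ck1_diff_at[OF cr U, of y z] x xyz by simp
      have ds: "case_prod s differentiable (at x)" using Ck1_diff_at[OF cs U, of y z] x xyz by simp
      have "(\<lambda>x. C (case_prod r x)) differentiable (at x)"
        by (rule differentiable_compose[where f=C and g="case_prod r", OF C' dr])
      moreover have "(\<lambda>x. D (case_prod s x)) differentiable (at x)"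
        by (rule differentiable_compose[where f=D and g="case_prod s", OF D' ds])
      ultimately have "(\<lambda>x. C (case_prod r x) + D (case_prod s x)) differentiable (at x)"
        by (rule differentiable_add)
      thus "(\<lambda>(a,b). C (r a b) + D (s a b)) differentiable (at x)" by (simp add: case_prod_beta')
    qed
  qed
  have c1y: "Ck_on 1 U (pdy psi)"
    using C1_Hp[OF U cr cs nz] Ck_cong[OF U, of "pdy psi" "\<lambda>y z. (r y z + s y z) / (1 - r y z * s y z)" 1] key by blast
  have c1z: "Ck_on 1 U (pdz psi)"
    using C1_Hq[OF U cr cs nz] Ck_cong[OF U, of "pdz psi" "\<lambda>y z. (s y z - r y z) / (1 - r y z * s y z)" 1] key by blast
  have BI: "BI_eq psi y z" if yz: "(y,z) \<in> U" for y z
  proof -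
    let ?r = "r y z" and ?s = "s y z"
    have ry: "((\<lambda>t. r t z) has_real_derivative pdy r y z) (at y)"
      using partials_from_diff(1)[OF Ck1_diff_at[OF cr U yz]] .
    have rz: "((\<lambda>t. r y t) has_real_derivative pdz r y z) (at z)"
      using partials_from_diff(2)[OF Ck1_diff_at[OF cr U yz]] .
    have sy: "((\<lambda>t. s t z) has_real_derivative pdy s y z) (at y)"
      using partials_from_diff(1)[OF Ck1_diff_at[OF cs U yz]] .
    have sz: "((\<lambda>t. s y t) has_real_derivative pdz s y z) (at z)"
      using partials_from_diff(2)[OF Ck1_diff_at[OF cs U yz]] .
    have k: "1 - ?r * ?s \<noteq> 0" using nz[OF yz] .
    have Pyy: "pdy (pdy psi) y z = ((1 + ?s\<^sup>2) * pdy r y z + (1 + ?r\<^sup>2) * pdy s y z) / (1 - ?r * ?s)\<^sup>2"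
    proof -
      have "pdy (pdy psi) y z = pdy (\<lambda>y z. (r y z + s y z) / (1 - r y z * s y z)) y z"
        by (rule pd_cong(1)[OF U yz]) (use key in blast)
      also have "\<dots> = ((1 + ?s\<^sup>2) * pdy r y z + (1 + ?r\<^sup>2) * pdy s y z) / (1 - ?r * ?s)\<^sup>2"
        by (rule pdy_eqI, rule DERIV_Hp[where f="\<lambda>t. r t z" and g="\<lambda>t. s t z" and x=y, OF ry sy k])
      finally show ?thesis .
    qed
    have Pyz: "pdz (pdy psi) y z = ((1 + ?s\<^sup>2) * pdz r y z + (1 + ?r\<^sup>2) * pdz s y z) / (1 - ?r * ?s)\<^sup>2"
    proof -
      have "pdz (pdy psi) y z = pdz (\<lambda>y z. (r y z + s y z) / (1 - r y z * s y z)) y z"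
        by (rule pd_cong(2)[OF U yz]) (use key in blast)
      also have "\<dots> = ((1 + ?s\<^sup>2) * pdz r y z + (1 + ?r\<^sup>2) * pdz s y z) / (1 - ?r * ?s)\<^sup>2"
        by (rule pdz_eqI, rule DERIV_Hp[where f="\<lambda>t. r y t" and g="\<lambda>t. s y t" and x=z, OF rz sz k])
      finally show ?thesis .
    qed
    have Qzz: "pdz (pdz psi) y z = ((?s\<^sup>2 - 1) * pdz r y z + (1 - ?r\<^sup>2) * pdz s y z) / (1 - ?r * ?s)\<^sup>2"
    proof -
      have "pdz (pdz psi) y z = pdz (\<lambda>y z. (s y z - r y z) / (1 - r y z * s y z)) y z"
        by (rule pd_cong(2)[OF U yz]) (use key in blast)
      also have "\<dots> = ((?s\<^sup>2 - 1) * pdz r y z + (1 - ?r\<^sup>2) * pdz s y z) / (1 - ?r * ?s)\<^sup>2"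
        by (rule pdz_eqI, rule DERIV_Hq[where f="\<lambda>t. r y t" and g="\<lambda>t. s y t" and x=z, OF rz sz k])
      finally show ?thesis .
    qed
    have P: "pdy psi y z = (?r + ?s) / (1 - ?r * ?s)" and Q: "pdz psi y z = (?s - ?r) / (1 - ?r * ?s)"
      and al: "(1 + ?s\<^sup>2) * pdz r y z + (1 - ?s\<^sup>2) * pdy r y z = 0"
      and be: "(1 + ?r\<^sup>2) * pdz s y z - (1 - ?r\<^sup>2) * pdy s y z = 0"
      using key[OF yz] by auto
    show ?thesis unfolding BI_eq_def P Q Pyy Pyz Qzz BI_identity[OF k] al be by simp
  qed
  show ?thesis unfolding Ck2_iff using diffpsi c1y c1z BI by blast
qed




lemma Ck_down: "Ck_on (Suc k) U f \<Longrightarrow> Ck_on k U f"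
proof (induction k arbitrary: f)
  case 0 then show ?case by (auto intro: differentiable_imp_continuous_on)
next
  case (Suc k)
  have "Ck_on (Suc (Suc k)) U f = (case_prod f differentiable_on U \<and> Ck_on (Suc k) U (pdy f) \<and> Ck_on (Suc k) U (pdz f))"
    by (rule Ck_on.simps(2))
  moreover have "Ck_on (Suc k) U f = (case_prod f differentiable_on U \<and> Ck_on k U (pdy f) \<and> Ck_on k U (pdz f))"
    by (rule Ck_on.simps(2))
  ultimately show ?case using Suc by blast
qed

lemma alpha_beta_zero:
  fixes r s ry rz sy sz :: real
  assumes D: "1 - r * s \<noteq> 0" and k: "1 - r\<^sup>2 * s\<^sup>2 \<noteq> 0"
    and compat: "((1 + s\<^sup>2) * rz + (1 + r\<^sup>2) * sz) / (1 - r * s)\<^sup>2 = ((s\<^sup>2 - 1) * ry + (1 - r\<^sup>2) * sy) / (1 - r * s)\<^sup>2"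
    and bi: "(1 - r\<^sup>2) * (1 + s\<^sup>2) * ((1 + s\<^sup>2) * rz + (1 - s\<^sup>2) * ry)
      - (1 + r\<^sup>2) * (1 - s\<^sup>2) * ((1 + r\<^sup>2) * sz - (1 - r\<^sup>2) * sy) = 0"
  shows "(1 + s\<^sup>2) * rz + (1 - s\<^sup>2) * ry = 0" "(1 + r\<^sup>2) * sz - (1 - r\<^sup>2) * sy = 0"
proof -
  have "(1 - r * s)\<^sup>2 \<noteq> 0" using D by simp
  hence N: "(1 + s\<^sup>2) * rz + (1 + r\<^sup>2) * sz = (s\<^sup>2 - 1) * ry + (1 - r\<^sup>2) * sy"
    using compat by simp
  define al where "al = (1 + s\<^sup>2) * rz + (1 - s\<^sup>2) * ry"
  define be where "be = (1 + r\<^sup>2) * sz - (1 - r\<^sup>2) * sy"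
  have ab: "al + be = 0" unfolding al_def be_def using N by algebra
  have "al * (2 * (1 - r\<^sup>2 * s\<^sup>2)) = 0"
    using bi ab unfolding al_def[symmetric] be_def[symmetric] by algebra
  hence "al = 0" using k by simp
  thus "(1 + s\<^sup>2) * rz + (1 - s\<^sup>2) * ry = 0" unfolding al_def .
  thus "(1 + r\<^sup>2) * sz - (1 - r\<^sup>2) * sy = 0" using ab unfolding al_def be_def by simp
qed

lemma jac_identity:
  fixes r s ry rz sy sz :: real
  shows "(((1 + s\<^sup>2) * ry + (1 + r\<^sup>2) * sy) / (1 - r * s)\<^sup>2) * (((s\<^sup>2 - 1) * rz + (1 - r\<^sup>2) * sz) / (1 - r * s)\<^sup>2)
     - (((1 + s\<^sup>2) * rz + (1 + r\<^sup>2) * sz) / (1 - r * s)\<^sup>2) * (((s\<^sup>2 - 1) * ry + (1 - r\<^sup>2) * sy) / (1 - r * s)\<^sup>2)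
     = (2 * (1 - r\<^sup>2 * s\<^sup>2) * (ry * sz - rz * sy)) / ((1 - r * s)\<^sup>2 * (1 - r * s)\<^sup>2)"
proof -
  have "((1 + s\<^sup>2) * ry + (1 + r\<^sup>2) * sy) * ((s\<^sup>2 - 1) * rz + (1 - r\<^sup>2) * sz)
      - ((1 + s\<^sup>2) * rz + (1 + r\<^sup>2) * sz) * ((s\<^sup>2 - 1) * ry + (1 - r\<^sup>2) * sy)
      = 2 * (1 - r\<^sup>2 * s\<^sup>2) * (ry * sz - rz * sy)" by algebra
  thus ?thesis by (simp add: times_divide_times_eq diff_divide_distrib[symmetric])
qed



lemma rs_alg:
  fixes p q :: real
  assumes pos: "1 + p * p - q * q > 0"
  defines "S \<equiv> sqrt (1 + p * p - q * q)"
  defines "r \<equiv> (p - q) / (1 + S)" and "s \<equiv> (p + q) / (1 + S)"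
  shows "1 - r * s = 2 / (1 + S)" "1 + r * s = 2 * S / (1 + S)" "S > 0"
    "p = (r + s) / (1 - r * s)" "q = (s - r) / (1 - r * s)"
proof -
  show Sp: "S > 0" unfolding S_def using pos by simp
  have S2: "S * S = 1 + p * p - q * q" unfolding S_def using pos by simp
  have ne: "1 + S \<noteq> 0" using Sp by simp
  have rs: "r * s = (S - 1) / (S + 1)"
  proof -
    have "r * s = (p * p - q * q) / ((1 + S) * (1 + S))" unfolding r_def s_def by (simp add: algebra_simps)
    also have "p * p - q * q = (S - 1) * (S + 1)" using S2 by (simp add: algebra_simps)
    finally show ?thesis using ne by (simp add: add.commute)
  qed
  show 1: "1 - r * s = 2 / (1 + S)" unfolding rs using ne by (simp add: field_simps)
  show "1 + r * s = 2 * S / (1 + S)" unfolding rs using ne by (simp add: field_simps)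
  have a0: "(p - q) + (p + q) = 2 * p" by simp
  have b0: "(p + q) - (p - q) = 2 * q" by simp
  have a: "r + s = 2 * p / (1 + S)" unfolding r_def s_def add_divide_distrib[symmetric] a0 ..
  have b: "s - r = 2 * q / (1 + S)" unfolding r_def s_def diff_divide_distrib[symmetric] b0 ..
  show "p = (r + s) / (1 - r * s)" unfolding 1 a using ne by simp
  show "q = (s - r) / (1 - r * s)" unfolding 1 b using ne by simp
qed

lemma solve_lin:
  fixes r s a b P Q :: real
  assumes D: "1 - r * s \<noteq> 0" and k: "1 - r\<^sup>2 * s\<^sup>2 \<noteq> 0"
    and hp: "P = ((1 + s\<^sup>2) * a + (1 + r\<^sup>2) * b) / (1 - r * s)\<^sup>2"
    and hq: "Q = ((s\<^sup>2 - 1) * a + (1 - r\<^sup>2) * b) / (1 - r * s)\<^sup>2"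
  shows "a = (1 - r * s)\<^sup>2 * ((1 - r\<^sup>2) * P - (1 + r\<^sup>2) * Q) / (2 * (1 - r\<^sup>2 * s\<^sup>2))"
    "b = (1 - r * s)\<^sup>2 * ((1 + s\<^sup>2) * Q - (s\<^sup>2 - 1) * P) / (2 * (1 - r\<^sup>2 * s\<^sup>2))"
proof -
  have D2: "(1 - r * s)\<^sup>2 \<noteq> 0" using D by simp
  have P': "(1 - r * s)\<^sup>2 * P = (1 + s\<^sup>2) * a + (1 + r\<^sup>2) * b" using hp D2 by simp
  have Q': "(1 - r * s)\<^sup>2 * Q = (s\<^sup>2 - 1) * a + (1 - r\<^sup>2) * b" using hq D2 by simp
  have "(1 - r * s)\<^sup>2 * ((1 - r\<^sup>2) * P - (1 + r\<^sup>2) * Q) = a * (2 * (1 - r\<^sup>2 * s\<^sup>2))"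
    using P' Q' by algebra
  thus "a = (1 - r * s)\<^sup>2 * ((1 - r\<^sup>2) * P - (1 + r\<^sup>2) * Q) / (2 * (1 - r\<^sup>2 * s\<^sup>2))"
    using k by (simp add: field_simps)
  have "(1 - r * s)\<^sup>2 * ((1 + s\<^sup>2) * Q - (s\<^sup>2 - 1) * P) = b * (2 * (1 - r\<^sup>2 * s\<^sup>2))"
    using P' Q' by algebra
  thus "b = (1 - r * s)\<^sup>2 * ((1 + s\<^sup>2) * Q - (s\<^sup>2 - 1) * P) / (2 * (1 - r\<^sup>2 * s\<^sup>2))"
    using k by (simp add: field_simps)
qed

lemma C1_pow2: "open U \<Longrightarrow> Ck_on 1 U f \<Longrightarrow> Ck_on 1 U (\<lambda>y z. (f y z)\<^sup>2)"
  using C1_mult[of U f f] by (simp add: power2_eq_square)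




locale BIsol =
  fixes psi :: "real \<Rightarrow> real \<Rightarrow> real" and Om :: "(real \<times> real) set"
  assumes Om: "open Om" and sm: "smooth_on2 Om psi"
    and bi: "\<forall>(y,z)\<in>Om. BI_eq psi y z"
    and tl: "\<forall>(y,z)\<in>Om. (pdy psi y z)\<^sup>2 - (pdz psi y z)\<^sup>2 + 1 > 0"
begin

lemma C3: "case_prod psi differentiable_on Om \<and> Ck_on 2 Om (pdy psi) \<and> Ck_on 2 Om (pdz psi)"
proof -
  have "Ck_on (Suc 2) Om psi" using sm unfolding smooth_on2_def by blast
  thus ?thesis by (rule Ck_on.simps(2)[THEN iffD1])
qed

lemma psi_diff: "case_prod psi differentiable_on Om" using C3 by blast

lemma p2: "case_prod (pdy psi) differentiable_on Om \<and> Ck_on 1 Om (pdy (pdy psi)) \<and> Ck_on 1 Om (pdz (pdy psi))"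
  using C3 Ck2_iff by blast
lemma q2: "case_prod (pdz psi) differentiable_on Om \<and> Ck_on 1 Om (pdy (pdz psi)) \<and> Ck_on 1 Om (pdz (pdz psi))"
  using C3 Ck2_iff by blast

lemma p1: "Ck_on 1 Om (pdy psi)" using Ck_down[of 1 Om "pdy psi", unfolded Suc_1] C3 by blast
lemma q1: "Ck_on 1 Om (pdz psi)" using Ck_down[of 1 Om "pdz psi", unfolded Suc_1] C3 by blast

lemma schw: "(y,z) \<in> Om \<Longrightarrow> pdz (pdy psi) y z = pdy (pdz psi) y z"
  using schwarz_pd[OF Om _ psi_diff p1 q1] by blast

definition "sq y z = sqrt (1 + pdy psi y z * pdy psi y z - pdz psi y z * pdz psi y z)"
definition "rr y z = (pdy psi y z - pdz psi y z) / (1 + sq y z)"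
definition "ss y z = (pdy psi y z + pdz psi y z) / (1 + sq y z)"

lemma rad_pos: "(y,z) \<in> Om \<Longrightarrow> 1 + pdy psi y z * pdy psi y z - pdz psi y z * pdz psi y z > 0"
  using tl by (auto simp: power2_eq_square)

lemma rs_facts:
  assumes "(y,z) \<in> Om"
  shows "1 - rr y z * ss y z > 0" "1 + rr y z * ss y z > 0"
    "pdy psi y z = (rr y z + ss y z) / (1 - rr y z * ss y z)"
    "pdz psi y z = (ss y z - rr y z) / (1 - rr y z * ss y z)"
proof -
  note R = rs_alg[OF rad_pos[OF assms]]
  have e: "rr y z = (pdy psi y z - pdz psi y z) / (1 + sqrt (1 + pdy psi y z * pdy psi y z - pdz psi y z * pdz psi y z))"
    "ss y z = (pdy psi y z + pdz psi y z) / (1 + sqrt (1 + pdy psi y z * pdy psi y z - pdz psi y z * pdz psi y z))"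
    by (simp_all add: rr_def ss_def sq_def)
  show "1 - rr y z * ss y z > 0" unfolding e R(1) using R(3) by (intro divide_pos_pos mult_pos_pos; linarith)
  show "1 + rr y z * ss y z > 0" unfolding e R(2) using R(3) by (intro divide_pos_pos mult_pos_pos; linarith)
  show "pdy psi y z = (rr y z + ss y z) / (1 - rr y z * ss y z)" unfolding e using R(4) .
  show "pdz psi y z = (ss y z - rr y z) / (1 - rr y z * ss y z)" unfolding e using R(5) .
qed

lemma rs_k: "(y,z) \<in> Om \<Longrightarrow> 1 - (rr y z)\<^sup>2 * (ss y z)\<^sup>2 > 0"
proof -
  assume a: "(y,z) \<in> Om"
  have "1 - (rr y z)\<^sup>2 * (ss y z)\<^sup>2 = (1 - rr y z * ss y z) * (1 + rr y z * ss y z)"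
    by (simp add: algebra_simps power2_eq_square)
  thus ?thesis using rs_facts(1,2)[OF a] by simp
qed

lemma sq_C1: "Ck_on 1 Om sq"
proof -
  have "Ck_on 1 Om (\<lambda>y z. sqrt (1 + pdy psi y z * pdy psi y z - pdz psi y z * pdz psi y z))"
    by (intro C1_sqrt C1_add C1_sub C1_mult C1_const Om p1 q1) (use rad_pos in auto)
  thus ?thesis by (simp add: sq_def[abs_def])
qed

lemma sq_pos: "(y,z) \<in> Om \<Longrightarrow> sq y z > 0"
  using rad_pos by (simp add: sq_def)

lemma rr_C1: "Ck_on 1 Om rr"
proof -
  have "Ck_on 1 Om (\<lambda>y z. (pdy psi y z - pdz psi y z) / (1 + sq y z))"
    by (intro C1_div C1_add C1_sub C1_const Om p1 q1 sq_C1) (use sq_pos in fastforce)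
  thus ?thesis by (simp add: rr_def[abs_def])
qed

lemma ss_C1: "Ck_on 1 Om ss"
proof -
  have "Ck_on 1 Om (\<lambda>y z. (pdy psi y z + pdz psi y z) / (1 + sq y z))"
    by (intro C1_div C1_add C1_sub C1_const Om p1 q1 sq_C1) (use sq_pos in fastforce)
  thus ?thesis by (simp add: ss_def[abs_def])
qed


lemma rr_d: assumes "(y,z) \<in> Om"
  shows "((\<lambda>t. rr t z) has_real_derivative pdy rr y z) (at y)" "((\<lambda>t. rr y t) has_real_derivative pdz rr y z) (at z)"
  using partials_from_diff(1,2)[OF Ck1_diff_at[OF rr_C1 Om assms]] by auto
lemma ss_d: assumes "(y,z) \<in> Om"
  shows "((\<lambda>t. ss t z) has_real_derivative pdy ss y z) (at y)" "((\<lambda>t. ss y t) has_real_derivative pdz ss y z) (at z)"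
  using partials_from_diff(1,2)[OF Ck1_diff_at[OF ss_C1 Om assms]] by auto

lemma Dne: "(y,z) \<in> Om \<Longrightarrow> 1 - rr y z * ss y z \<noteq> 0" using rs_facts(1) by force

lemma pid: "(a,b) \<in> Om \<Longrightarrow> pdy psi a b = (rr a b + ss a b) / (1 - rr a b * ss a b)" using rs_facts(3) by blast
lemma qid: "(a,b) \<in> Om \<Longrightarrow> pdz psi a b = (ss a b - rr a b) / (1 - rr a b * ss a b)" using rs_facts(4) by blast

lemma derivs:
  assumes yz: "(y,z) \<in> Om"
  shows "pdy (pdy psi) y z = ((1 + (ss y z)\<^sup>2) * pdy rr y z + (1 + (rr y z)\<^sup>2) * pdy ss y z) / (1 - rr y z * ss y z)\<^sup>2"
    "pdz (pdy psi) y z = ((1 + (ss y z)\<^sup>2) * pdz rr y z + (1 + (rr y z)\<^sup>2) * pdz ss y z) / (1 - rr y z * ss y z)\<^sup>2"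
    "pdy (pdz psi) y z = (((ss y z)\<^sup>2 - 1) * pdy rr y z + (1 - (rr y z)\<^sup>2) * pdy ss y z) / (1 - rr y z * ss y z)\<^sup>2"
    "pdz (pdz psi) y z = (((ss y z)\<^sup>2 - 1) * pdz rr y z + (1 - (rr y z)\<^sup>2) * pdz ss y z) / (1 - rr y z * ss y z)\<^sup>2"
proof -
  note k = Dne[OF yz]
  note pd = partials_from_diff(1,2)[OF Ck1_diff_at[OF p1 Om yz]]
  note qd = partials_from_diff(1,2)[OF Ck1_diff_at[OF q1 Om yz]]
  show "pdy (pdy psi) y z = ((1 + (ss y z)\<^sup>2) * pdy rr y z + (1 + (rr y z)\<^sup>2) * pdy ss y z) / (1 - rr y z * ss y z)\<^sup>2"
    by (rule pdy_unique[OF Om yz, of "pdy psi" "\<lambda>a b. (rr a b + ss a b) / (1 - rr a b * ss a b)", OF pid pd(1)]; (assumption | rule DERIV_Hp[where f="\<lambda>t. rr t z" and g="\<lambda>t. ss t z" and x=y, OF rr_d(1)[OF yz] ss_d(1)[OF yz] k]))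
  show "pdz (pdy psi) y z = ((1 + (ss y z)\<^sup>2) * pdz rr y z + (1 + (rr y z)\<^sup>2) * pdz ss y z) / (1 - rr y z * ss y z)\<^sup>2"
    by (rule pdz_unique[OF Om yz, of "pdy psi" "\<lambda>a b. (rr a b + ss a b) / (1 - rr a b * ss a b)", OF pid pd(2)]; (assumption | rule DERIV_Hp[where f="\<lambda>t. rr y t" and g="\<lambda>t. ss y t" and x=z, OF rr_d(2)[OF yz] ss_d(2)[OF yz] k]))
  show "pdy (pdz psi) y z = (((ss y z)\<^sup>2 - 1) * pdy rr y z + (1 - (rr y z)\<^sup>2) * pdy ss y z) / (1 - rr y z * ss y z)\<^sup>2"
    by (rule pdy_unique[OF Om yz, of "pdz psi" "\<lambda>a b. (ss a b - rr a b) / (1 - rr a b * ss a b)", OF qid qd(1)]; (assumption | rule DERIV_Hq[where f="\<lambda>t. rr t z" and g="\<lambda>t. ss t z" and x=y, OF rr_d(1)[OF yz] ss_d(1)[OF yz] k]))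
  show "pdz (pdz psi) y z = (((ss y z)\<^sup>2 - 1) * pdz rr y z + (1 - (rr y z)\<^sup>2) * pdz ss y z) / (1 - rr y z * ss y z)\<^sup>2"
    by (rule pdz_unique[OF Om yz, of "pdz psi" "\<lambda>a b. (ss a b - rr a b) / (1 - rr a b * ss a b)", OF qid qd(2)]; (assumption | rule DERIV_Hq[where f="\<lambda>t. rr y t" and g="\<lambda>t. ss y t" and x=z, OF rr_d(2)[OF yz] ss_d(2)[OF yz] k]))
qed

lemma E12:
  assumes yz: "(y,z) \<in> Om"
  shows "(1 + (ss y z)\<^sup>2) * pdz rr y z + (1 - (ss y z)\<^sup>2) * pdy rr y z = 0"
    "(1 + (rr y z)\<^sup>2) * pdz ss y z - (1 - (rr y z)\<^sup>2) * pdy ss y z = 0"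
proof -
  note D = Dne[OF yz]
  have k: "1 - (rr y z)\<^sup>2 * (ss y z)\<^sup>2 \<noteq> 0" using rs_k[OF yz] by simp
  have compat: "((1 + (ss y z)\<^sup>2) * pdz rr y z + (1 + (rr y z)\<^sup>2) * pdz ss y z) / (1 - rr y z * ss y z)\<^sup>2
      = (((ss y z)\<^sup>2 - 1) * pdy rr y z + (1 - (rr y z)\<^sup>2) * pdy ss y z) / (1 - rr y z * ss y z)\<^sup>2"
    using schw[OF yz] unfolding derivs[OF yz] .
  have "BI_eq psi y z" using bi yz by blast
  hence "((1 - (rr y z)\<^sup>2) * (1 + (ss y z)\<^sup>2) * ((1 + (ss y z)\<^sup>2) * pdz rr y z + (1 - (ss y z)\<^sup>2) * pdy rr y z)
      - (1 + (rr y z)\<^sup>2) * (1 - (ss y z)\<^sup>2) * ((1 + (rr y z)\<^sup>2) * pdz ss y z - (1 - (rr y z)\<^sup>2) * pdy ss y z))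
      / (1 - rr y z * ss y z) ^ 4 = 0"
    unfolding BI_eq_def derivs[OF yz] rs_facts(3,4)[OF yz] BI_identity[OF D] .
  hence bi0: "(1 - (rr y z)\<^sup>2) * (1 + (ss y z)\<^sup>2) * ((1 + (ss y z)\<^sup>2) * pdz rr y z + (1 - (ss y z)\<^sup>2) * pdy rr y z)
      - (1 + (rr y z)\<^sup>2) * (1 - (ss y z)\<^sup>2) * ((1 + (rr y z)\<^sup>2) * pdz ss y z - (1 - (rr y z)\<^sup>2) * pdy ss y z) = 0"
    using D by simp
  show "(1 + (ss y z)\<^sup>2) * pdz rr y z + (1 - (ss y z)\<^sup>2) * pdy rr y z = 0"
    using alpha_beta_zero(1)[OF D k compat bi0] .
  show "(1 + (rr y z)\<^sup>2) * pdz ss y z - (1 - (rr y z)\<^sup>2) * pdy ss y z = 0"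
    using alpha_beta_zero(2)[OF D k compat bi0] .
qed


lemma partial_formulas:
  assumes yz: "(y,z) \<in> Om"
  shows "pdy rr y z = (1 - rr y z * ss y z)\<^sup>2 * ((1 - (rr y z)\<^sup>2) * pdy (pdy psi) y z - (1 + (rr y z)\<^sup>2) * pdy (pdz psi) y z) / (2 * (1 - (rr y z)\<^sup>2 * (ss y z)\<^sup>2))"
    "pdy ss y z = (1 - rr y z * ss y z)\<^sup>2 * ((1 + (ss y z)\<^sup>2) * pdy (pdz psi) y z - ((ss y z)\<^sup>2 - 1) * pdy (pdy psi) y z) / (2 * (1 - (rr y z)\<^sup>2 * (ss y z)\<^sup>2))"
    "pdz rr y z = (1 - rr y z * ss y z)\<^sup>2 * ((1 - (rr y z)\<^sup>2) * pdz (pdy psi) y z - (1 + (rr y z)\<^sup>2) * pdz (pdz psi) y z) / (2 * (1 - (rr y z)\<^sup>2 * (ss y z)\<^sup>2))"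
    "pdz ss y z = (1 - rr y z * ss y z)\<^sup>2 * ((1 + (ss y z)\<^sup>2) * pdz (pdz psi) y z - ((ss y z)\<^sup>2 - 1) * pdz (pdy psi) y z) / (2 * (1 - (rr y z)\<^sup>2 * (ss y z)\<^sup>2))"
proof -
  note D = Dne[OF yz]
  have k: "1 - (rr y z)\<^sup>2 * (ss y z)\<^sup>2 \<noteq> 0" using rs_k[OF yz] by simp
  show "pdy rr y z = (1 - rr y z * ss y z)\<^sup>2 * ((1 - (rr y z)\<^sup>2) * pdy (pdy psi) y z - (1 + (rr y z)\<^sup>2) * pdy (pdz psi) y z) / (2 * (1 - (rr y z)\<^sup>2 * (ss y z)\<^sup>2))"
    using solve_lin(1)[OF D k derivs(1)[OF yz] derivs(3)[OF yz]] .
  show "pdy ss y z = (1 - rr y z * ss y z)\<^sup>2 * ((1 + (ss y z)\<^sup>2) * pdy (pdz psi) y z - ((ss y z)\<^sup>2 - 1) * pdy (pdy psi) y z) / (2 * (1 - (rr y z)\<^sup>2 * (ss y z)\<^sup>2))"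
    using solve_lin(2)[OF D k derivs(1)[OF yz] derivs(3)[OF yz]] .
  show "pdz rr y z = (1 - rr y z * ss y z)\<^sup>2 * ((1 - (rr y z)\<^sup>2) * pdz (pdy psi) y z - (1 + (rr y z)\<^sup>2) * pdz (pdz psi) y z) / (2 * (1 - (rr y z)\<^sup>2 * (ss y z)\<^sup>2))"
    using solve_lin(1)[OF D k derivs(2)[OF yz] derivs(4)[OF yz]] .
  show "pdz ss y z = (1 - rr y z * ss y z)\<^sup>2 * ((1 + (ss y z)\<^sup>2) * pdz (pdz psi) y z - ((ss y z)\<^sup>2 - 1) * pdz (pdy psi) y z) / (2 * (1 - (rr y z)\<^sup>2 * (ss y z)\<^sup>2))"
    using solve_lin(2)[OF D k derivs(2)[OF yz] derivs(4)[OF yz]] .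
qed

lemma Ck_transfer: "Ck_on k U g \<Longrightarrow> open U \<Longrightarrow> (\<And>a b. (a,b) \<in> U \<Longrightarrow> f a b = g a b) \<Longrightarrow> Ck_on k U f"
  using Ck_cong by blast

lemma C1_gen:
  assumes "Ck_on 1 Om P" "Ck_on 1 Om Q"
  shows "Ck_on 1 Om (\<lambda>y z. (1 - rr y z * ss y z)\<^sup>2 * (P y z) / (2 * (1 - (rr y z)\<^sup>2 * (ss y z)\<^sup>2)))"
  using rs_k by (intro C1_div C1_mult C1_pow2 C1_sub C1_const rr_C1 ss_C1 Om assms) force+

lemma pr_C1: "Ck_on 1 Om (pdy rr)" "Ck_on 1 Om (pdy ss)" "Ck_on 1 Om (pdz rr)" "Ck_on 1 Om (pdz ss)"
proof -
  have py: "Ck_on 1 Om (pdy (pdy psi))" "Ck_on 1 Om (pdy (pdz psi))" using p2 q2 by blast+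
  have pz: "Ck_on 1 Om (pdz (pdy psi))" "Ck_on 1 Om (pdz (pdz psi))" using p2 q2 by blast+
  have a: "Ck_on 1 Om (\<lambda>y z. (1 - (rr y z)\<^sup>2) * pdy (pdy psi) y z - (1 + (rr y z)\<^sup>2) * pdy (pdz psi) y z)"
    by (intro C1_sub C1_mult C1_add C1_pow2 C1_const rr_C1 ss_C1 Om py)
  have b: "Ck_on 1 Om (\<lambda>y z. (1 + (ss y z)\<^sup>2) * pdy (pdz psi) y z - ((ss y z)\<^sup>2 - 1) * pdy (pdy psi) y z)"
    by (intro C1_sub C1_mult C1_add C1_pow2 C1_const rr_C1 ss_C1 Om py)
  have c: "Ck_on 1 Om (\<lambda>y z. (1 - (rr y z)\<^sup>2) * pdz (pdy psi) y z - (1 + (rr y z)\<^sup>2) * pdz (pdz psi) y z)"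
    by (intro C1_sub C1_mult C1_add C1_pow2 C1_const rr_C1 ss_C1 Om pz)
  have d: "Ck_on 1 Om (\<lambda>y z. (1 + (ss y z)\<^sup>2) * pdz (pdz psi) y z - ((ss y z)\<^sup>2 - 1) * pdz (pdy psi) y z)"
    by (intro C1_sub C1_mult C1_add C1_pow2 C1_const rr_C1 ss_C1 Om pz)
  show "Ck_on 1 Om (pdy rr)"
    by (rule Ck_transfer[OF C1_gen[OF a a] Om partial_formulas(1)])
  show "Ck_on 1 Om (pdy ss)"
    by (rule Ck_transfer[OF C1_gen[OF b b] Om partial_formulas(2)])
  show "Ck_on 1 Om (pdz rr)"
    by (rule Ck_transfer[OF C1_gen[OF c c] Om partial_formulas(3)])
  show "Ck_on 1 Om (pdz ss)"
    by (rule Ck_transfer[OF C1_gen[OF d d] Om partial_formulas(4)])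
qed

definition "Jac y z = pdy rr y z * pdz ss y z - pdz rr y z * pdy ss y z"

lemma Jac_C1: "Ck_on 1 Om Jac"
  unfolding Jac_def[abs_def] by (intro C1_sub C1_mult pr_C1 Om)

lemma Jac_ne: assumes yz: "(y,z) \<in> Om" and K: "gauss_curv psi y z \<noteq> 0" shows "Jac y z \<noteq> 0"
proof
  assume J: "Jac y z = 0"
  have "pdy (pdy psi) y z * pdz (pdz psi) y z - (pdz (pdy psi) y z)\<^sup>2
     = pdy (pdy psi) y z * pdz (pdz psi) y z - pdz (pdy psi) y z * pdy (pdz psi) y z"
    using schw[OF yz] by (simp add: power2_eq_square)
  also have "\<dots> = 0"
    unfolding derivs[OF yz] jac_identity using J by (simp add: Jac_def)
  finally show False using K by (simp add: gauss_curv_def)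
qed

end




lemma bl_mat: "bounded_linear (\<lambda>(h::real,k::real). (a*h + b*k, c*h + d*k))"
proof -
  have "linear (\<lambda>(h::real,k::real). (a*h + b*k, c*h + d*k))"
    by (rule linearI) (auto simp: algebra_simps)
  thus ?thesis using linear_conv_bounded_linear by blast
qed

definition mat2 :: "real \<Rightarrow> real \<Rightarrow> real \<Rightarrow> real \<Rightarrow> (real \<times> real) \<Rightarrow>\<^sub>L (real \<times> real)" where
  "mat2 a b c d = Blinfun (\<lambda>(h,k). (a*h + b*k, c*h + d*k))"

lemma mat2_apply: "blinfun_apply (mat2 a b c d) = (\<lambda>(h,k). (a*h + b*k, c*h + d*k))"
  unfolding mat2_def using bounded_linear_Blinfun_apply[OF bl_mat] .

lemma Basis_real2: "(Basis :: (real \<times> real) set) = {(1,0), (0,1)}"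
  by (auto simp: Basis_prod_def)

lemma inv2:
  fixes a b c d h k J :: real
  assumes "J = a * d - b * c" "J \<noteq> 0"
  shows "d / J * (a * h + b * k) + - b / J * (c * h + d * k) = h"
    "- c / J * (a * h + b * k) + a / J * (c * h + d * k) = k"
proof -
  have e1: "d * (a * h + b * k) - b * (c * h + d * k) = J * h" unfolding assms(1) by (simp add: algebra_simps)
  have "d / J * (a * h + b * k) + - b / J * (c * h + d * k) = (d * (a * h + b * k) - b * (c * h + d * k)) / J"
    by (simp add: diff_divide_distrib)
  also have "\<dots> = h" unfolding e1 using assms(2) by simp
  finally show "d / J * (a * h + b * k) + - b / J * (c * h + d * k) = h" .
  have e2: "a * (c * h + d * k) - c * (a * h + b * k) = J * k" unfolding assms(1) by (simp add: algebra_simps)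
  have "- c / J * (a * h + b * k) + a / J * (c * h + d * k) = (a * (c * h + d * k) - c * (a * h + b * k)) / J"
    by (simp add: diff_divide_distrib)
  also have "\<dots> = k" unfolding e2 using assms(2) by simp
  finally show "- c / J * (a * h + b * k) + a / J * (c * h + d * k) = k" .
qed

lemma local_inverse:
  fixes r s :: "real \<Rightarrow> real \<Rightarrow> real"
  assumes U1: "open U1" and cr: "Ck_on 1 U1 r" and cs: "Ck_on 1 U1 s" and x0: "(y0,z0) \<in> U1"
    and J0: "pdy r y0 z0 * pdz s y0 z0 - pdz r y0 z0 * pdy s y0 z0 \<noteq> 0"
  obtains U' V g where "open U'" "U' \<subseteq> U1" "(y0,z0) \<in> U'" "open V" "(r y0 z0, s y0 z0) \<in> V"
    "homeomorphism U' V (\<lambda>x. (case_prod r x, case_prod s x)) g"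
    "\<And>w. w \<in> V \<Longrightarrow> g differentiable (at w)"
proof -
  define f where "f = (\<lambda>x. (case_prod r x, case_prod s x))"
  define f' where "f' = (\<lambda>x. mat2 (case_prod (pdy r) x) (case_prod (pdz r) x) (case_prod (pdy s) x) (case_prod (pdz s) x))"
  define J where "J = pdy r y0 z0 * pdz s y0 z0 - pdz r y0 z0 * pdy s y0 z0"
  define invf where "invf = mat2 (pdz s y0 z0 / J) (- pdz r y0 z0 / J) (- pdy s y0 z0 / J) (pdy r y0 z0 / J)"
  have derf: "(f has_derivative blinfun_apply (f' x)) (at x)" if "x \<in> U1" for x
  proof -
    obtain a b where x: "x = (a,b)" by fastforce
    have dr: "(case_prod r has_derivative (\<lambda>(h,k). pdy r a b * h + pdz r a b * k)) (at (a,b))"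
      using partials_from_diff(3)[OF Ck1_diff_at[OF cr U1]] that x by blast
    have ds: "(case_prod s has_derivative (\<lambda>(h,k). pdy s a b * h + pdz s a b * k)) (at (a,b))"
      using partials_from_diff(3)[OF Ck1_diff_at[OF cs U1]] that x by blast
    have "(f has_derivative (\<lambda>v. ((\<lambda>(h,k). pdy r a b * h + pdz r a b * k) v, (\<lambda>(h,k). pdy s a b * h + pdz s a b * k) v))) (at (a,b))"
      unfolding f_def by (rule has_derivative_Pair[OF dr ds])
    moreover have "(\<lambda>v. ((\<lambda>(h,k). pdy r a b * h + pdz r a b * k) v, (\<lambda>(h,k). pdy s a b * h + pdz s a b * k) v))
       = blinfun_apply (f' x)"
      by (auto simp: f'_def x mat2_apply fun_eq_iff)
    ultimately show ?thesis using x by simp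
  qed
  have contf: "continuous_on U1 f'"
  proof (rule continuous_on_blinfun_componentwise)
    fix i :: "real \<times> real" assume "i \<in> Basis"
    hence i: "i = (1,0) \<or> i = (0,1)" by (simp add: Basis_real2)
    have c: "continuous_on U1 (case_prod (pdy r))" "continuous_on U1 (case_prod (pdz r))"
      "continuous_on U1 (case_prod (pdy s))" "continuous_on U1 (case_prod (pdz s))"
      using cr cs by (auto simp: Ck1_iff)
    show "continuous_on U1 (\<lambda>x. blinfun_apply (f' x) i)"
      using i
    proof
      assume "i = (1,0)"
      thus ?thesis unfolding f'_def mat2_apply using c by (auto intro!: continuous_intros)
    next
      assume "i = (0,1)"
      thus ?thesis unfolding f'_def mat2_apply using c by (auto intro!: continuous_intros)
    qed
  qed
  have Jne: "J \<noteq> 0" using J0 by (simp add: J_def)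
  have invf: "invf o\<^sub>L f' (y0,z0) = id_blinfun"
  proof (rule blinfun_eqI)
    fix v :: "real \<times> real"
    obtain h k where v: "v = (h,k)" by fastforce
    show "blinfun_apply (invf o\<^sub>L f' (y0,z0)) v = blinfun_apply id_blinfun v"
      unfolding v invf_def f'_def using inv2[OF J_def Jne]
      by (simp add: mat2_apply)
  qed
  obtain U' V g g' where o1: "open U'" "U' \<subseteq> U1" "(y0,z0) \<in> U'" "open V" "f (y0,z0) \<in> V"
      "homeomorphism U' V f g" and der: "\<And>y. y \<in> V \<Longrightarrow> (g has_derivative (g' y)) (at y)"
    using inverse_function_theorem[OF U1 derf contf x0 invf] by metis
  show ?thesis
  proof (rule that[OF o1(1-4)])
    show "(r y0 z0, s y0 z0) \<in> V" using o1(5) by (simp add: f_def)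
    show "homeomorphism U' V (\<lambda>x. (case_prod r x, case_prod s x)) g" using o1(6) by (simp add: f_def)
    fix w assume "w \<in> V" thus "g differentiable (at w)" using der unfolding differentiable_def by blast
  qed
qed


lemma pd_sub:
  fixes f g :: "real \<Rightarrow> real \<Rightarrow> real"
  assumes "case_prod f differentiable (at (y,z))" "case_prod g differentiable (at (y,z))"
  shows "pdy (\<lambda>a b. f a b - g a b) y z = pdy f y z - pdy g y z"
    "pdz (\<lambda>a b. f a b - g a b) y z = pdz f y z - pdz g y z"
  using partials_from_diff(1,2)[OF assms(1)] partials_from_diff(1,2)[OF assms(2)]
  by (auto intro!: pdy_eqI pdz_eqI DERIV_diff)

lemma pd_add:
  fixes f g :: "real \<Rightarrow> real \<Rightarrow> real"
  assumes "case_prod f differentiable (at (y,z))" "case_prod g differentiable (at (y,z))"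
  shows "pdy (\<lambda>a b. f a b + g a b) y z = pdy f y z + pdy g y z"
    "pdz (\<lambda>a b. f a b + g a b) y z = pdz f y z + pdz g y z"
  using partials_from_diff(1,2)[OF assms(1)] partials_from_diff(1,2)[OF assms(2)]
  by (auto intro!: pdy_eqI pdz_eqI DERIV_add)

lemma solve2:
  fixes a b c d x y J :: real
  assumes J: "J = a * d - b * c" "J \<noteq> 0"
  shows "a * x + b * y = 1 \<Longrightarrow> c * x + d * y = 0 \<Longrightarrow> x = d / J \<and> y = - c / J"
    and "a * x + b * y = 0 \<Longrightarrow> c * x + d * y = 1 \<Longrightarrow> x = - b / J \<and> y = a / J"
proof -
  assume 1: "a * x + b * y = 1" and 2: "c * x + d * y = 0"
  have "J * x = d" unfolding J(1) using 1 2 by algebra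
  moreover have "J * y = - c" unfolding J(1) using 1 2 by algebra
  ultimately show "x = d / J \<and> y = - c / J" using J(2) by (simp add: field_simps)
next
  assume 1: "a * x + b * y = 0" and 2: "c * x + d * y = 1"
  have "J * x = - b" unfolding J(1) using 1 2 by algebra
  moreover have "J * y = a" unfolding J(1) using 1 2 by algebra
  ultimately show "x = - b / J \<and> y = a / J" using J(2) by (simp add: field_simps)
qed



lemma psi_alg:
  fixes a b u v w c J :: real
  assumes D: "1 - a * b \<noteq> 0" and J: "J \<noteq> 0"
    and n: "(a + b) * u + (b - a) * v = c * (1 - a * b) * w"
  shows "(a + b) / (1 - a * b) * (u / J) + (b - a) / (1 - a * b) * (v / J) = c * (w / J)"
proof -
  have "(a + b) / (1 - a * b) * (u / J) + (b - a) / (1 - a * b) * (v / J)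
      = ((a + b) * u) / ((1 - a * b) * J) + ((b - a) * v) / ((1 - a * b) * J)"
    by (simp only: times_divide_times_eq)
  also have "\<dots> = ((a + b) * u + (b - a) * v) / ((1 - a * b) * J)"
    by (simp only: add_divide_distrib[symmetric])
  also have "\<dots> = (c * w) * (1 - a * b) / ((1 - a * b) * J)" unfolding n by (simp only: mult_ac)
  also have "\<dots> = c * (w / J)" using D by simp
  finally show ?thesis .
qed

locale BIchart = BIsol +
  fixes U1 U' V :: "(real \<times> real) set" and g :: "real \<times> real \<Rightarrow> real \<times> real"
  assumes U1: "open U1" "U1 \<subseteq> Om" and JU1: "\<And>y z. (y,z) \<in> U1 \<Longrightarrow> Jac y z \<noteq> 0"
    and U': "open U'" "U' \<subseteq> U1" and V: "open V"
    and hom: "homeomorphism U' V (\<lambda>x. (case_prod rr x, case_prod ss x)) g"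
    and gd: "\<And>w. w \<in> V \<Longrightarrow> g differentiable (at w)"
begin

definition "Y a b = fst (g (a,b))"
definition "Z a b = snd (g (a,b))"

lemma gV: "(a,b) \<in> V \<Longrightarrow> (Y a b, Z a b) \<in> U'"
  using hom unfolding homeomorphism_def Y_def Z_def by auto

lemma gV1: "(a,b) \<in> V \<Longrightarrow> (Y a b, Z a b) \<in> U1" using gV U'(2) by blast
lemma gOm: "(a,b) \<in> V \<Longrightarrow> (Y a b, Z a b) \<in> Om" using gV1 U1(2) by blast

lemma inv: "(a,b) \<in> V \<Longrightarrow> rr (Y a b) (Z a b) = a \<and> ss (Y a b) (Z a b) = b"
proof -
  assume w: "(a,b) \<in> V"
  have "(\<lambda>x. (case_prod rr x, case_prod ss x)) (g (a,b)) = (a,b)"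
    using hom w unfolding homeomorphism_def by blast
  thus ?thesis unfolding Y_def Z_def by (simp add: case_prod_beta')
qed

lemma Yd: "(a,b) \<in> V \<Longrightarrow> case_prod Y differentiable (at (a,b))"
proof -
  assume w: "(a,b) \<in> V"
  have "case_prod Y = (\<lambda>x. fst (g x))" by (auto simp: Y_def fun_eq_iff)
  moreover have "(\<lambda>x. fst (g x)) differentiable (at (a,b))"
    by (rule differentiable_compose[where f=fst]) (auto intro: gd[OF w])
  ultimately show ?thesis by simp
qed

lemma Zd: "(a,b) \<in> V \<Longrightarrow> case_prod Z differentiable (at (a,b))"
proof -
  assume w: "(a,b) \<in> V"
  have "case_prod Z = (\<lambda>x. snd (g x))" by (auto simp: Z_def fun_eq_iff)
  moreover have "(\<lambda>x. snd (g x)) differentiable (at (a,b))"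
    by (rule differentiable_compose[where f=snd]) (auto intro: gd[OF w])
  ultimately show ?thesis by simp
qed

lemma Yd_on: "case_prod Y differentiable_on V" and Zd_on: "case_prod Z differentiable_on V"
  using Yd Zd V by (auto simp: differentiable_on_eq_differentiable_at)

lemma rrC1: "Ck_on 1 U1 rr" and ssC1: "Ck_on 1 U1 ss"
  using rr_C1 ss_C1 Ck_mono[OF U1(2)] by blast+

lemma YZ_partials:
  assumes w: "(a,b) \<in> V"
  shows "pdy Y a b = pdz ss (Y a b) (Z a b) / Jac (Y a b) (Z a b)"
    "pdy Z a b = - pdy ss (Y a b) (Z a b) / Jac (Y a b) (Z a b)"
    "pdz Y a b = - pdz rr (Y a b) (Z a b) / Jac (Y a b) (Z a b)"
    "pdz Z a b = pdy rr (Y a b) (Z a b) / Jac (Y a b) (Z a b)"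
proof -
  let ?y = "Y a b" and ?z = "Z a b"
  have u: "(?y, ?z) \<in> U1" using gV1[OF w] .
  have dr: "case_prod rr differentiable (at (?y, ?z))" using Ck1_diff_at[OF rrC1 U1(1) u] .
  have ds: "case_prod ss differentiable (at (?y, ?z))" using Ck1_diff_at[OF ssC1 U1(1) u] .
  note cr = pd_comp[OF dr Yd[OF w] Zd[OF w]]
  note cs = pd_comp[OF ds Yd[OF w] Zd[OF w]]
  have i1: "pdy (\<lambda>a b. rr (Y a b) (Z a b)) a b = pdy (\<lambda>a b. a) a b"
    by (rule pd_cong(1)[OF V w]) (use inv in blast)
  have i2: "pdy (\<lambda>a b. ss (Y a b) (Z a b)) a b = pdy (\<lambda>a b. b) a b"
    by (rule pd_cong(1)[OF V w]) (use inv in blast)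
  have i3: "pdz (\<lambda>a b. rr (Y a b) (Z a b)) a b = pdz (\<lambda>a b. a) a b"
    by (rule pd_cong(2)[OF V w]) (use inv in blast)
  have i4: "pdz (\<lambda>a b. ss (Y a b) (Z a b)) a b = pdz (\<lambda>a b. b) a b"
    by (rule pd_cong(2)[OF V w]) (use inv in blast)
  have e1: "pdy rr ?y ?z * pdy Y a b + pdz rr ?y ?z * pdy Z a b = 1" using cr(2) i1 by (simp add: pd_basic)
  have e2: "pdy ss ?y ?z * pdy Y a b + pdz ss ?y ?z * pdy Z a b = 0" using cs(2) i2 by (simp add: pd_basic)
  have e3: "pdy rr ?y ?z * pdz Y a b + pdz rr ?y ?z * pdz Z a b = 0" using cr(3) i3 by (simp add: pd_basic)
  have e4: "pdy ss ?y ?z * pdz Y a b + pdz ss ?y ?z * pdz Z a b = 1" using cs(3) i4 by (simp add: pd_basic)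
  have J: "Jac ?y ?z = pdy rr ?y ?z * pdz ss ?y ?z - pdz rr ?y ?z * pdy ss ?y ?z" by (simp add: Jac_def)
  note S1 = solve2(1)[OF J JU1[OF u] e1 e2]
  note S2 = solve2(2)[OF J JU1[OF u] e3 e4]
  show "pdy Y a b = pdz ss (Y a b) (Z a b) / Jac (Y a b) (Z a b)" using S1 by simp
  show "pdy Z a b = - pdy ss (Y a b) (Z a b) / Jac (Y a b) (Z a b)" using S1 by simp
  show "pdz Y a b = - pdz rr (Y a b) (Z a b) / Jac (Y a b) (Z a b)" using S2 by simp
  show "pdz Z a b = pdy rr (Y a b) (Z a b) / Jac (Y a b) (Z a b)" using S2 by simp
qed


lemma C1_neg: "open U \<Longrightarrow> Ck_on 1 U f \<Longrightarrow> Ck_on 1 U (\<lambda>y z. - f y z)"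
  using C1_sub[OF _ C1_const[of U 0], of f] by simp

lemma JacC1: "Ck_on 1 U1 Jac" using Jac_C1 Ck_mono[OF U1(2)] by blast
lemma prC1: "Ck_on 1 U1 (pdy rr)" "Ck_on 1 U1 (pdy ss)" "Ck_on 1 U1 (pdz rr)" "Ck_on 1 U1 (pdz ss)"
  using pr_C1 Ck_mono[OF U1(2)] by blast+

lemma kC1:
  assumes "Ck_on 1 U1 P"
  shows "Ck_on 1 U1 (\<lambda>y z. P y z / Jac y z)"
  by (intro C1_div U1(1) assms JacC1) (use JU1 in auto)

lemma g_cont: "continuous_on V g" using hom unfolding homeomorphism_def by blast
lemma g_img: "g ` V \<subseteq> U1" using hom U'(2) unfolding homeomorphism_def by blast

lemma comp_cont:
  assumes "Ck_on 1 U1 k"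
  shows "continuous_on V (\<lambda>x. case_prod k (g x))"
  by (rule continuous_on_compose2[OF Ck1_cont[OF assms] g_cont g_img])

lemma gYZ: "g (a,b) = (Y a b, Z a b)" by (simp add: Y_def Z_def)

lemma cont_transfer:
  assumes "Ck_on 1 U1 k" "\<And>a b. (a,b) \<in> V \<Longrightarrow> h a b = k (Y a b) (Z a b)"
  shows "continuous_on V (case_prod h)"
proof -
  have "continuous_on V (\<lambda>x. case_prod k (g x))" by (rule comp_cont[OF assms(1)])
  thus ?thesis by (rule continuous_on_cong[THEN iffD1, rotated 2]) (auto simp: gYZ assms(2))
qed

lemma Y_C1: "Ck_on 1 V Y"
  unfolding Ck1_iff
proof (intro conjI Yd_on)
  show "continuous_on V (case_prod (pdy Y))"
    by (rule cont_transfer[OF kC1[OF prC1(4)]]) (rule YZ_partials(1))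
  show "continuous_on V (case_prod (pdz Y))"
    by (rule cont_transfer[OF kC1[OF C1_sub[OF U1(1) C1_const[of U1 0] prC1(3)]]]) (simp add: YZ_partials(3))
qed

lemma Z_C1: "Ck_on 1 V Z"
  unfolding Ck1_iff
proof (intro conjI Zd_on)
  show "continuous_on V (case_prod (pdy Z))"
    by (rule cont_transfer[OF kC1[OF C1_sub[OF U1(1) C1_const[of U1 0] prC1(2)]]]) (simp add: YZ_partials(2))
  show "continuous_on V (case_prod (pdz Z))"
    by (rule cont_transfer[OF kC1[OF prC1(1)]]) (rule YZ_partials(4))
qed

definition "X a b = Y a b - Z a b"
definition "W a b = Y a b + Z a b"

lemma X_diff: "(a,b) \<in> V \<Longrightarrow> case_prod X differentiable (at (a,b))"
proof -
  assume w: "(a,b) \<in> V"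
  have "(\<lambda>x. case_prod Y x - case_prod Z x) differentiable (at (a,b))"
    by (rule differentiable_diff[OF Yd[OF w] Zd[OF w]])
  moreover have "case_prod X = (\<lambda>x. case_prod Y x - case_prod Z x)" by (auto simp: X_def fun_eq_iff)
  ultimately show ?thesis by simp
qed
lemma W_diff: "(a,b) \<in> V \<Longrightarrow> case_prod W differentiable (at (a,b))"
proof -
  assume w: "(a,b) \<in> V"
  have "(\<lambda>x. case_prod Y x + case_prod Z x) differentiable (at (a,b))"
    by (rule differentiable_add[OF Yd[OF w] Zd[OF w]])
  moreover have "case_prod W = (\<lambda>x. case_prod Y x + case_prod Z x)" by (auto simp: W_def fun_eq_iff)
  ultimately show ?thesis by simp
qed
lemma X_diff_on: "case_prod X differentiable_on V" and W_diff_on: "case_prod W differentiable_on V"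
  using X_diff W_diff V by (auto simp: differentiable_on_eq_differentiable_at)

lemma XW_partials:
  assumes w: "(a,b) \<in> V"
  shows "pdy X a b = (pdz ss (Y a b) (Z a b) + pdy ss (Y a b) (Z a b)) / Jac (Y a b) (Z a b)"
    "pdz X a b = (- pdz rr (Y a b) (Z a b) - pdy rr (Y a b) (Z a b)) / Jac (Y a b) (Z a b)"
    "pdy W a b = (pdz ss (Y a b) (Z a b) - pdy ss (Y a b) (Z a b)) / Jac (Y a b) (Z a b)"
    "pdz W a b = (- pdz rr (Y a b) (Z a b) + pdy rr (Y a b) (Z a b)) / Jac (Y a b) (Z a b)"
proof -
  have x: "X = (\<lambda>a b. Y a b - Z a b)" by (simp add: X_def[abs_def])
  have ww: "W = (\<lambda>a b. Y a b + Z a b)" by (simp add: W_def[abs_def])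
  note S = pd_sub[OF Yd[OF w] Zd[OF w]] and A = pd_add[OF Yd[OF w] Zd[OF w]]
  show "pdy X a b = (pdz ss (Y a b) (Z a b) + pdy ss (Y a b) (Z a b)) / Jac (Y a b) (Z a b)"
    unfolding x S YZ_partials[OF w] by (simp add: diff_divide_distrib add_divide_distrib)
  show "pdz X a b = (- pdz rr (Y a b) (Z a b) - pdy rr (Y a b) (Z a b)) / Jac (Y a b) (Z a b)"
    unfolding x S YZ_partials[OF w] by (simp add: diff_divide_distrib add_divide_distrib)
  show "pdy W a b = (pdz ss (Y a b) (Z a b) - pdy ss (Y a b) (Z a b)) / Jac (Y a b) (Z a b)"
    unfolding ww A YZ_partials[OF w] by (simp add: diff_divide_distrib add_divide_distrib)
  show "pdz W a b = (- pdz rr (Y a b) (Z a b) + pdy rr (Y a b) (Z a b)) / Jac (Y a b) (Z a b)"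
    unfolding ww A YZ_partials[OF w] by (simp add: diff_divide_distrib add_divide_distrib)
qed

lemma XW_C1: "Ck_on 1 V (pdy X)" "Ck_on 1 V (pdz X)" "Ck_on 1 V (pdy W)" "Ck_on 1 V (pdz W)"
proof -
  have k1: "Ck_on 1 U1 (\<lambda>y z. (pdz ss y z + pdy ss y z) / Jac y z)"
    by (rule kC1, intro C1_add U1(1) prC1)
  have k2: "Ck_on 1 U1 (\<lambda>y z. (- pdz rr y z - pdy rr y z) / Jac y z)"
    by (rule kC1, intro C1_sub C1_neg U1(1) prC1)
  have k3: "Ck_on 1 U1 (\<lambda>y z. (pdz ss y z - pdy ss y z) / Jac y z)"
    by (rule kC1, intro C1_sub U1(1) prC1)
  have k4: "Ck_on 1 U1 (\<lambda>y z. (- pdz rr y z + pdy rr y z) / Jac y z)"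
    by (rule kC1, intro C1_add C1_neg U1(1) prC1)
  show "Ck_on 1 V (pdy X)"
    by (rule Ck_transfer[OF C1_comp[OF V U1(1) k1 Y_C1 Z_C1 gV1] V XW_partials(1)])
  show "Ck_on 1 V (pdz X)"
    by (rule Ck_transfer[OF C1_comp[OF V U1(1) k2 Y_C1 Z_C1 gV1] V XW_partials(2)])
  show "Ck_on 1 V (pdy W)"
    by (rule Ck_transfer[OF C1_comp[OF V U1(1) k3 Y_C1 Z_C1 gV1] V XW_partials(3)])
  show "Ck_on 1 V (pdz W)"
    by (rule Ck_transfer[OF C1_comp[OF V U1(1) k4 Y_C1 Z_C1 gV1] V XW_partials(4)])
qed


lemma rel:
  assumes w: "(a,b) \<in> V"
  shows "pdz X a b = - b\<^sup>2 * pdz W a b" "pdy W a b = - a\<^sup>2 * pdy X a b"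
proof -
  let ?y = "Y a b" and ?z = "Z a b"
  have o: "(?y, ?z) \<in> Om" using gOm[OF w] .
  have ab: "rr ?y ?z = a" "ss ?y ?z = b" using inv[OF w] by auto
  have E1: "(1 + b\<^sup>2) * pdz rr ?y ?z + (1 - b\<^sup>2) * pdy rr ?y ?z = 0" using E12(1)[OF o] ab by simp
  have E2: "(1 + a\<^sup>2) * pdz ss ?y ?z - (1 - a\<^sup>2) * pdy ss ?y ?z = 0" using E12(2)[OF o] ab by simp
  have n1: "- pdz rr ?y ?z - pdy rr ?y ?z = - b\<^sup>2 * (- pdz rr ?y ?z + pdy rr ?y ?z)" using E1 by algebra
  have n2: "pdz ss ?y ?z - pdy ss ?y ?z = - a\<^sup>2 * (pdz ss ?y ?z + pdy ss ?y ?z)" using E2 by algebra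
  show "pdz X a b = - b\<^sup>2 * pdz W a b" unfolding XW_partials[OF w] n1 by simp
  show "pdy W a b = - a\<^sup>2 * pdy X a b" unfolding XW_partials[OF w] n2 by simp
qed

lemma schX: "(a,b) \<in> V \<Longrightarrow> pdz (pdy X) a b = pdy (pdz X) a b"
  using schwarz_pd[OF V _ X_diff_on XW_C1(1) XW_C1(2)] by blast
lemma schW: "(a,b) \<in> V \<Longrightarrow> pdz (pdy W) a b = pdy (pdz W) a b"
  using schwarz_pd[OF V _ W_diff_on XW_C1(3) XW_C1(4)] by blast

lemma kV: "(a,b) \<in> V \<Longrightarrow> 1 - a\<^sup>2 * b\<^sup>2 > 0"
  using rs_k[OF gOm] inv by force

lemma mixed:
  assumes w: "(a,b) \<in> V"
  shows "pdz (pdy X) a b = 0" "pdy (pdz W) a b = 0" "pdz (pdy W) a b = 0"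
proof -
  have h1: "pdy (pdz X) a b = - b\<^sup>2 * pdy (pdz W) a b"
  proof -
    have "pdy (pdz X) a b = pdy (\<lambda>a b. - b\<^sup>2 * pdz W a b) a b"
      by (rule pd_cong(1)[OF V w]) (use rel(1) in blast)
    also have "\<dots> = - b\<^sup>2 * pdy (pdz W) a b"
      by (rule pdy_eqI, rule DERIV_cmult, rule partials_from_diff(1)[OF Ck1_diff_at[OF XW_C1(4) V w]])
    finally show ?thesis .
  qed
  have h2: "pdz (pdy W) a b = - a\<^sup>2 * pdz (pdy X) a b"
  proof -
    have "pdz (pdy W) a b = pdz (\<lambda>a b. - a\<^sup>2 * pdy X a b) a b"
      by (rule pd_cong(2)[OF V w]) (use rel(2) in blast)
    also have "\<dots> = - a\<^sup>2 * pdz (pdy X) a b"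
      by (rule pdz_eqI, rule DERIV_cmult, rule partials_from_diff(2)[OF Ck1_diff_at[OF XW_C1(1) V w]])
    finally show ?thesis .
  qed
  have "pdz (pdy X) a b = (a\<^sup>2 * b\<^sup>2) * pdz (pdy X) a b"
    using schX[OF w] schW[OF w] h1 h2 by simp
  hence "(1 - a\<^sup>2 * b\<^sup>2) * pdz (pdy X) a b = 0" by (simp add: algebra_simps)
  thus x0: "pdz (pdy X) a b = 0" using kV[OF w] by simp
  show "pdz (pdy W) a b = 0" using h2 x0 by simp
  thus "pdy (pdz W) a b = 0" using schW[OF w] by simp
qed

definition "Psi a b = psi (Y a b) (Z a b)"

lemma Psi_partials:
  assumes w: "(a,b) \<in> V"
  shows "pdy Psi a b = a * pdy X a b" "pdz Psi a b = b * pdz W a b"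
proof -
  let ?y = "Y a b" and ?z = "Z a b"
  have o: "(?y, ?z) \<in> Om" using gOm[OF w] .
  have ab: "rr ?y ?z = a" "ss ?y ?z = b" using inv[OF w] by auto
  have D: "1 - a * b \<noteq> 0" using Dne[OF o] ab by simp
  have J: "Jac ?y ?z \<noteq> 0" using JU1[OF gV1[OF w]] .
  have E1: "(1 + b\<^sup>2) * pdz rr ?y ?z + (1 - b\<^sup>2) * pdy rr ?y ?z = 0" using E12(1)[OF o] ab by simp
  have E2: "(1 + a\<^sup>2) * pdz ss ?y ?z - (1 - a\<^sup>2) * pdy ss ?y ?z = 0" using E12(2)[OF o] ab by simp
  have pd: "case_prod psi differentiable (at (?y, ?z))"
    using psi_diff Om o by (auto simp: differentiable_on_eq_differentiable_at)
  note c = pd_comp[OF pd Yd[OF w] Zd[OF w]]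
  have P: "pdy psi ?y ?z = (a + b) / (1 - a * b)" using pid[OF o] ab by simp
  have Q: "pdz psi ?y ?z = (b - a) / (1 - a * b)" using qid[OF o] ab by simp
  have py: "pdy Psi a b = pdy psi ?y ?z * pdy Y a b + pdz psi ?y ?z * pdy Z a b"
    using c(2) by (simp add: Psi_def[abs_def])
  have pz: "pdz Psi a b = pdy psi ?y ?z * pdz Y a b + pdz psi ?y ?z * pdz Z a b"
    using c(3) by (simp add: Psi_def[abs_def])
  have n1: "(a + b) * pdz ss ?y ?z + (b - a) * (- pdy ss ?y ?z) = a * (1 - a * b) * (pdz ss ?y ?z + pdy ss ?y ?z)"
    using E2 by algebra
  have n2: "(a + b) * (- pdz rr ?y ?z) + (b - a) * pdy rr ?y ?z = b * (1 - a * b) * (- pdz rr ?y ?z + pdy rr ?y ?z)"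
    using E1 by algebra
  show "pdy Psi a b = a * pdy X a b"
    unfolding py P Q YZ_partials[OF w] XW_partials[OF w] by (rule psi_alg[OF D J n1])
  show "pdz Psi a b = b * pdz W a b"
    unfolding pz P Q YZ_partials[OF w] XW_partials[OF w] by (rule psi_alg[OF D J n2])
qed

end




lemma const_on:
  assumes "convex S" "\<And>x. x \<in> S \<Longrightarrow> (f has_real_derivative 0) (at x)" "x \<in> S" "y \<in> S"
  shows "f x = f y"
proof -
  obtain c where "\<forall>x\<in>S. f x = c"
    using has_field_derivative_zero_constant[OF assms(1), of f] assms(2) has_field_derivative_at_within by blast
  thus ?thesis using assms(3,4) by simp
qed

context BIchart
begin

lemma Psi_diff: "(a,b) \<in> V \<Longrightarrow> case_prod Psi differentiable (at (a,b))"
proof -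
  assume w: "(a,b) \<in> V"
  have pd: "case_prod psi differentiable (at (Y a b, Z a b))"
    using psi_diff Om gOm[OF w] by (auto simp: differentiable_on_eq_differentiable_at)
  show ?thesis using pd_comp(1)[OF pd Yd[OF w] Zd[OF w]] by (simp add: Psi_def[abs_def])
qed

lemma separation:
  fixes I J :: "real set"
  assumes I: "convex I" and J: "convex J" and IJ: "I \<times> J \<subseteq> V" and r0: "r0 \<in> I" and s0: "s0 \<in> J"
    and a: "a \<in> I" and b: "b \<in> J"
  shows "X a b = X a s0 + X r0 b - X r0 s0"
    "W a b = W a s0 + W r0 b - W r0 s0"
    "Psi a b = Psi a s0 + Psi r0 b - Psi r0 s0"
    "pdy X a b = pdy X a s0"
    "pdz W a b = pdz W r0 b"
proof -
  have inV: "(x,y) \<in> V" if "x \<in> I" "y \<in> J" for x y using IJ that by blast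
  have Xy: "pdy X x y = pdy X x s0" if "x \<in> I" "y \<in> J" for x y
  proof (rule const_on[OF J _ that(2) s0, where f="\<lambda>t. pdy X x t"])
    fix t assume t: "t \<in> J"
    show "((\<lambda>t. pdy X x t) has_real_derivative 0) (at t)"
      using partials_from_diff(2)[OF Ck1_diff_at[OF XW_C1(1) V inV[OF that(1) t]]] mixed(1)[OF inV[OF that(1) t]]
      by simp
  qed
  show "pdy X a b = pdy X a s0" using Xy[OF a b] .
  have Wz: "pdz W x y = pdz W r0 y" if "x \<in> I" "y \<in> J" for x y
  proof (rule const_on[OF I _ that(1) r0, where f="\<lambda>t. pdz W t y"])
    fix t assume t: "t \<in> I"
    show "((\<lambda>t. pdz W t y) has_real_derivative 0) (at t)"
      using partials_from_diff(1)[OF Ck1_diff_at[OF XW_C1(4) V inV[OF t that(2)]]] mixed(2)[OF inV[OF t that(2)]]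
      by simp
  qed
  show "pdz W a b = pdz W r0 b" using Wz[OF a b] .
  have "X a b - X a s0 = X r0 b - X r0 s0"
  proof (rule const_on[OF I _ a r0, where f="\<lambda>t. X t b - X t s0"])
    fix t assume t: "t \<in> I"
    have "((\<lambda>t. X t b - X t s0) has_real_derivative pdy X t b - pdy X t s0) (at t)"
      by (intro DERIV_diff partials_from_diff(1)[OF X_diff] inV t b s0)
    thus "((\<lambda>t. X t b - X t s0) has_real_derivative 0) (at t)" using Xy[OF t b] by simp
  qed
  thus "X a b = X a s0 + X r0 b - X r0 s0" by simp
  have "W a b - W r0 b = W a s0 - W r0 s0"
  proof (rule const_on[OF J _ b s0, where f="\<lambda>t. W a t - W r0 t"])
    fix t assume t: "t \<in> J"
    have "((\<lambda>t. W a t - W r0 t) has_real_derivative pdz W a t - pdz W r0 t) (at t)"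
      by (intro DERIV_diff partials_from_diff(2)[OF W_diff] inV t a r0)
    thus "((\<lambda>t. W a t - W r0 t) has_real_derivative 0) (at t)" using Wz[OF a t] by simp
  qed
  thus "W a b = W a s0 + W r0 b - W r0 s0" by simp
  have "Psi a b - Psi a s0 = Psi r0 b - Psi r0 s0"
  proof (rule const_on[OF I _ a r0, where f="\<lambda>t. Psi t b - Psi t s0"])
    fix t assume t: "t \<in> I"
    have "((\<lambda>t. Psi t b - Psi t s0) has_real_derivative pdy Psi t b - pdy Psi t s0) (at t)"
      by (intro DERIV_diff partials_from_diff(1)[OF Psi_diff] inV t b s0)
    thus "((\<lambda>t. Psi t b - Psi t s0) has_real_derivative 0) (at t)"
      using Xy[OF t b] Psi_partials(1)[OF inV[OF t b]] Psi_partials(1)[OF inV[OF t s0]] by simp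
  qed
  thus "Psi a b = Psi a s0 + Psi r0 b - Psi r0 s0" by simp
qed


lemma rep_exists:
  assumes x0: "(y0,z0) \<in> U'"
  shows "\<exists>U r s F G A B C D. open U \<and> (y0, z0) \<in> U \<and> U \<subseteq> Om
            \<and> param_chart U r s \<and> BI_rep psi U r s F G A B C D"
proof -
  define f where "f = (\<lambda>x. (case_prod rr x, case_prod ss x))"
  have hom': "homeomorphism U' V f g" using hom by (simp add: f_def)
  define r0 where "r0 = rr y0 z0"
  define s0 where "s0 = ss y0 z0"
  have p0: "(r0, s0) \<in> V" using hom' x0 unfolding homeomorphism_def f_def r0_def s0_def by force
  obtain e where e: "e > 0" "ball (r0,s0) e \<subseteq> V" using V p0 open_contains_ball by blast
  define I where "I = {r0 - e/2 <..< r0 + e/2}"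
  define J where "J = {s0 - e/2 <..< s0 + e/2}"
  have IJ: "I \<times> J \<subseteq> V"
  proof
    fix x assume "x \<in> I \<times> J"
    then obtain a b where x: "x = (a,b)" "a \<in> I" "b \<in> J" by blast
    have "dist (a,b) (r0,s0) = sqrt ((dist a r0)\<^sup>2 + (dist b s0)\<^sup>2)" by (simp add: dist_Pair_Pair)
    also have "\<dots> \<le> \<bar>dist a r0\<bar> + \<bar>dist b s0\<bar>" by (rule sqrt_sum_squares_le_sum_abs)
    also have "\<dots> < e" using x(2,3) by (auto simp: I_def J_def dist_real_def)
    finally have "(a,b) \<in> ball (r0,s0) e" by (simp add: dist_commute)
    thus "x \<in> V" using e x by blast
  qed
  have r0I: "r0 \<in> I" and s0J: "s0 \<in> J" using e by (auto simp: I_def J_def)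
  have cI: "convex I" and cJ: "convex J" by (auto simp: I_def J_def)
  have oI: "open I" and oJ: "open J" by (auto simp: I_def J_def)
  have inV: "(a,b) \<in> V" if "a \<in> I" "b \<in> J" for a b using IJ that by blast
  define U where "U = {x \<in> U'. case_prod rr x \<in> I \<and> case_prod ss x \<in> J}"
  have fc: "continuous_on U' f" using hom' unfolding homeomorphism_def by blast
  have "open (f -` (I \<times> J) \<inter> U')"
    using fc U'(1) oI oJ unfolding continuous_on_open_vimage[OF U'(1)] by (simp add: open_Times)
  moreover have "f -` (I \<times> J) \<inter> U' = U" by (auto simp: U_def f_def)
  ultimately have oU: "open U" by simp
  have y0U: "(y0,z0) \<in> U" using x0 r0I s0J by (simp add: U_def r0_def s0_def)
  have UU': "U \<subseteq> U'" by (auto simp: U_def)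
  have UOm: "U \<subseteq> Om" using UU' U'(2) U1(2) by blast
  have gf: "g (f x) = x" if "x \<in> U'" for x using hom' that unfolding homeomorphism_def by blast
  have pc: "param_chart U rr ss"
    unfolding param_chart_def
  proof (intro conjI)
    show "Ck_on 1 U rr" using rr_C1 Ck_mono[OF UOm] by blast
    show "Ck_on 1 U ss" using ss_C1 Ck_mono[OF UOm] by blast
    show "inj_on (\<lambda>(y, z). (rr y z, ss y z)) U"
    proof (rule inj_onI)
      fix x x' assume "x \<in> U" "x' \<in> U" "(\<lambda>(y, z). (rr y z, ss y z)) x = (\<lambda>(y, z). (rr y z, ss y z)) x'"
      hence "f x = f x'" "x \<in> U'" "x' \<in> U'" using UU' by (auto simp: f_def case_prod_beta')
      thus "x = x'" using gf by metis
    qed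
    show "\<forall>(y, z)\<in>U. pdy rr y z * pdz ss y z - pdz rr y z * pdy ss y z \<noteq> 0"
      using JU1 UU' U'(2) by (auto simp: Jac_def)
  qed
  define F where "F = (\<lambda>a. X a s0)"
  define G where "G = (\<lambda>b. W r0 b)"
  define A where "A = (\<lambda>b. X r0 s0 - X r0 b)"
  define B where "B = (\<lambda>a. W r0 s0 - W a s0)"
  define C where "C = (\<lambda>a. Psi a s0)"
  define D where "D = (\<lambda>b. Psi r0 b - Psi r0 s0)"
  have dF: "(F has_real_derivative pdy X a s0) (at a)" if "a \<in> I" for a
    unfolding F_def using partials_from_diff(1)[OF X_diff[OF inV[OF that s0J]]] .
  have dG: "(G has_real_derivative pdz W r0 b) (at b)" if "b \<in> J" for b
    unfolding G_def using partials_from_diff(2)[OF W_diff[OF inV[OF r0I that]]] .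
  have derF: "deriv F a = pdy X a s0" if "a \<in> I" for a using dF[OF that] by (rule DERIV_imp_deriv)
  have derG: "deriv G b = pdz W r0 b" if "b \<in> J" for b using dG[OF that] by (rule DERIV_imp_deriv)
  have dF2: "(deriv F has_real_derivative pdy (pdy X) a s0) (at a)" if "a \<in> I" for a
  proof -
    have "((\<lambda>t. pdy X t s0) has_real_derivative pdy (pdy X) a s0) (at a)"
      using partials_from_diff(1)[OF Ck1_diff_at[OF XW_C1(1) V inV[OF that s0J]]] .
    thus ?thesis by (rule has_field_derivative_transform_within_open[OF _ oI that]) (simp add: derF)
  qed
  have dG2: "(deriv G has_real_derivative pdz (pdz W) r0 b) (at b)" if "b \<in> J" for b
  proof -
    have "((\<lambda>t. pdz W r0 t) has_real_derivative pdz (pdz W) r0 b) (at b)"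
      using partials_from_diff(2)[OF Ck1_diff_at[OF XW_C1(4) V inV[OF r0I that]]] .
    thus ?thesis by (rule has_field_derivative_transform_within_open[OF _ oJ that]) (simp add: derG)
  qed
  have C2F: "C2_on1 I F"
    unfolding C2_on1_def
  proof (intro conjI)
    show "F differentiable_on I" using dF oI
      by (auto simp: differentiable_on_eq_differentiable_at real_differentiable_def)
    show "deriv F differentiable_on I" using dF2 oI
      by (auto simp: differentiable_on_eq_differentiable_at real_differentiable_def)
    have c: "continuous_on I (\<lambda>t. case_prod (pdy (pdy X)) (t, s0))"
      by (rule continuous_on_compose2[OF _ _ _, where f="\<lambda>t. (t, s0)"])
         (use XW_C1(1) inV s0J in \<open>auto simp: Ck1_iff intro!: continuous_intros\<close>)
    have e: "\<And>x. x \<in> I \<Longrightarrow> deriv (deriv F) x = pdy (pdy X) x s0" using DERIV_imp_deriv dF2 by blast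
    show "continuous_on I (deriv (deriv F))"
      by (rule continuous_on_cong[THEN iffD1, OF refl _ c]) (simp add: e)
  qed
  have C2G: "C2_on1 J G"
    unfolding C2_on1_def
  proof (intro conjI)
    show "G differentiable_on J" using dG oJ
      by (auto simp: differentiable_on_eq_differentiable_at real_differentiable_def)
    show "deriv G differentiable_on J" using dG2 oJ
      by (auto simp: differentiable_on_eq_differentiable_at real_differentiable_def)
    have c: "continuous_on J (\<lambda>t. case_prod (pdz (pdz W)) (r0, t))"
      by (rule continuous_on_compose2[OF _ _ _, where f="\<lambda>t. (r0, t)"])
         (use XW_C1(4) inV r0I in \<open>auto simp: Ck1_iff intro!: continuous_intros\<close>)
    have e: "\<And>x. x \<in> J \<Longrightarrow> deriv (deriv G) x = pdz (pdz W) r0 x" using DERIV_imp_deriv dG2 by blast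
    show "continuous_on J (deriv (deriv G))"
      by (rule continuous_on_cong[THEN iffD1, OF refl _ c]) (simp add: e)
  qed
  have dA: "\<forall>x\<in>J. (A has_real_derivative x\<^sup>2 * deriv G x) (at x)"
  proof
    fix b assume b: "b \<in> J"
    have "(A has_real_derivative 0 - pdz X r0 b) (at b)"
      unfolding A_def by (intro DERIV_diff DERIV_const partials_from_diff(2)[OF X_diff[OF inV[OF r0I b]]])
    moreover have "0 - pdz X r0 b = b\<^sup>2 * deriv G b" using rel(1)[OF inV[OF r0I b]] derG[OF b] by simp
    ultimately show "(A has_real_derivative b\<^sup>2 * deriv G b) (at b)" by simp
  qed
  have dB: "\<forall>x\<in>I. (B has_real_derivative x\<^sup>2 * deriv F x) (at x)"
  proof
    fix a assume a: "a \<in> I"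
    have "(B has_real_derivative 0 - pdy W a s0) (at a)"
      unfolding B_def by (intro DERIV_diff DERIV_const partials_from_diff(1)[OF W_diff[OF inV[OF a s0J]]])
    moreover have "0 - pdy W a s0 = a\<^sup>2 * deriv F a" using rel(2)[OF inV[OF a s0J]] derF[OF a] by simp
    ultimately show "(B has_real_derivative a\<^sup>2 * deriv F a) (at a)" by simp
  qed
  have dC: "\<forall>x\<in>I. (C has_real_derivative x * deriv F x) (at x)"
  proof
    fix a assume a: "a \<in> I"
    have "(C has_real_derivative pdy Psi a s0) (at a)"
      unfolding C_def using partials_from_diff(1)[OF Psi_diff[OF inV[OF a s0J]]] .
    thus "(C has_real_derivative a * deriv F a) (at a)" using Psi_partials(1)[OF inV[OF a s0J]] derF[OF a] by simp
  qed
  have dD: "\<forall>x\<in>J. (D has_real_derivative x * deriv G x) (at x)"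
  proof
    fix b assume b: "b \<in> J"
    have "(D has_real_derivative pdz Psi r0 b - 0) (at b)"
      unfolding D_def by (intro DERIV_diff DERIV_const partials_from_diff(2)[OF Psi_diff[OF inV[OF r0I b]]])
    thus "(D has_real_derivative b * deriv G b) (at b)" using Psi_partials(2)[OF inV[OF r0I b]] derG[OF b] by simp
  qed
  have repr: "\<forall>(y, z)\<in>U. y - z = F (rr y z) - A (ss y z) \<and> y + z = G (ss y z) - B (rr y z)
               \<and> psi y z = C (rr y z) + D (ss y z)"
  proof (clarify)
    fix y z assume yz: "(y,z) \<in> U"
    let ?a = "rr y z" and ?b = "ss y z"
    have a: "?a \<in> I" and b: "?b \<in> J" using yz by (auto simp: U_def)
    have "g (?a, ?b) = (y,z)" using gf[of "(y,z)"] yz UU' by (auto simp: f_def)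
    hence YZ: "Y ?a ?b = y" "Z ?a ?b = z" by (auto simp: Y_def Z_def)
    note sep = separation[OF cI cJ IJ r0I s0J a b]
    show "y - z = F ?a - A ?b \<and> y + z = G ?b - B ?a \<and> psi y z = C ?a + D ?b"
      using sep(1,2,3) YZ by (simp add: F_def A_def G_def B_def C_def D_def X_def W_def Psi_def)
  qed
  have "BI_rep psi U rr ss F G A B C D"
    unfolding BI_rep_def
    by (rule exI[of _ I], rule exI[of _ J]) (use oI oJ C2F C2G dA dB dC dD repr U_def in auto)
  thus ?thesis using oU y0U UOm pc by blast
qed

end




lemma forward_main:
  fixes psi :: "real \<Rightarrow> real \<Rightarrow> real"
  assumes Om: "open Om" and sm: "smooth_on2 Om psi"
    and bi: "\<forall>(y,z)\<in>Om. BI_eq psi y z"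
    and tl: "\<forall>(y,z)\<in>Om. (pdy psi y z)\<^sup>2 - (pdz psi y z)\<^sup>2 + 1 > 0"
    and p0: "(y0, z0) \<in> Om" and K: "gauss_curv psi y0 z0 \<noteq> 0"
  shows "\<exists>U r s F G A B C D. open U \<and> (y0, z0) \<in> U \<and> U \<subseteq> Om
            \<and> param_chart U r s \<and> BI_rep psi U r s F G A B C D"
proof -
  interpret S: BIsol psi Om using Om sm bi tl by unfold_locales
  define U1 where "U1 = {x \<in> Om. case_prod S.Jac x \<noteq> 0}"
  have cJ: "continuous_on Om (case_prod S.Jac)" using Ck1_cont[OF S.Jac_C1] .
  have "open (case_prod S.Jac -` (-{0}) \<inter> Om)"
    using cJ unfolding continuous_on_open_vimage[OF Om] by (simp add: open_Compl)
  moreover have "case_prod S.Jac -` (-{0}) \<inter> Om = U1" by (auto simp: U1_def)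
  ultimately have oU1: "open U1" by simp
  have U1Om: "U1 \<subseteq> Om" by (auto simp: U1_def)
  have x0: "(y0,z0) \<in> U1" using p0 S.Jac_ne[OF p0 K] by (simp add: U1_def)
  have JU1: "S.Jac y z \<noteq> 0" if "(y,z) \<in> U1" for y z using that by (simp add: U1_def)
  have cr: "Ck_on 1 U1 S.rr" and cs: "Ck_on 1 U1 S.ss" using S.rr_C1 S.ss_C1 Ck_mono[OF U1Om] by blast+
  have J0: "pdy S.rr y0 z0 * pdz S.ss y0 z0 - pdz S.rr y0 z0 * pdy S.ss y0 z0 \<noteq> 0"
    using JU1[OF x0] by (simp add: S.Jac_def)
  obtain U' V g where o: "open U'" "U' \<subseteq> U1" "(y0,z0) \<in> U'" "open V" "(S.rr y0 z0, S.ss y0 z0) \<in> V"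
    and hom: "homeomorphism U' V (\<lambda>x. (case_prod S.rr x, case_prod S.ss x)) g"
    and gd: "\<And>w. w \<in> V \<Longrightarrow> g differentiable (at w)"
    using local_inverse[OF oU1 cr cs x0 J0] by blast
  interpret C: BIchart psi Om U1 U' V g
    by (unfold_locales) (use oU1 U1Om JU1 o hom gd in auto)
  show ?thesis using C.rep_exists[OF o(3)] .
qed

theorem theorem5p1:
  shows
  "(\<forall>(psi :: real \<Rightarrow> real \<Rightarrow> real) \<Omega> y0 z0.
       open \<Omega> \<and> smooth_on2 \<Omega> psi
     \<and> (\<forall>(y, z)\<in>\<Omega>. BI_eq psi y z)
     \<and> (\<forall>(y, z)\<in>\<Omega>. (pdy psi y z)\<^sup>2 - (pdz psi y z)\<^sup>2 + 1 > 0)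
     \<and> (y0, z0) \<in> \<Omega> \<and> gauss_curv psi y0 z0 \<noteq> 0
     \<longrightarrow> (\<exists>U r s F G A B C D. open U \<and> (y0, z0) \<in> U \<and> U \<subseteq> \<Omega>
            \<and> param_chart U r s \<and> BI_rep psi U r s F G A B C D))
   \<and> (\<forall>(psi :: real \<Rightarrow> real \<Rightarrow> real) U r s F G A B C D.
       open U \<and> param_chart U r s \<and> BI_rep psi U r s F G A B C D
     \<longrightarrow> Ck_on 2 U psi \<and> (\<forall>(y, z)\<in>U. BI_eq psi y z))"
proof (rule conjI; intro allI impI)
  fix psi :: "real \<Rightarrow> real \<Rightarrow> real" and \<Omega> y0 z0
  assume H: "open \<Omega> \<and> smooth_on2 \<Omega> psi
     \<and> (\<forall>(y, z)\<in>\<Omega>. BI_eq psi y z)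
     \<and> (\<forall>(y, z)\<in>\<Omega>. (pdy psi y z)\<^sup>2 - (pdz psi y z)\<^sup>2 + 1 > 0)
     \<and> (y0, z0) \<in> \<Omega> \<and> gauss_curv psi y0 z0 \<noteq> 0"
  show "\<exists>U r s F G A B C D. open U \<and> (y0, z0) \<in> U \<and> U \<subseteq> \<Omega>
            \<and> param_chart U r s \<and> BI_rep psi U r s F G A B C D"
    using forward_main[of \<Omega> psi y0 z0] H by blast
next
  fix psi :: "real \<Rightarrow> real \<Rightarrow> real" and U r s F G A B C D
  assume "open U \<and> param_chart U r s \<and> BI_rep psi U r s F G A B C D"
  thus "Ck_on 2 U psi \<and> (\<forall>(y, z)\<in>U. BI_eq psi y z)" using converse_main by blast
qed


end
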